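(* Let $q=p^e$ with $p$ an odd prime and $e\ge2$ even. Let $f\in\mathcal{RF}$ with $\varepsilon$ the sign of its Walsh transform. Let $\beta$ be a generator of $\mathbb{F}_q^*$, let $d_1,\dots,d_q$ be the elements of $\mathbb{F}_q$ with $d_q=0$, and let $G_2$ be the $(e+2)\times q$ matrix with first row $(1,\dots,1)$, second row $(f(d_1)+1,\dots,f(d_q)+1)$, and $(i+3)$-th row $(\mathrm{Tr}_{q/p}(\beta^id_1),\dots,\mathrm{Tr}_{q/p}(\beta^id_q))$ for $0\le i\le e-1$. Let $\mathcal{C}_f'$ be the $p$-ary code generated by $G_2'=[I_{e+2}:G_2]$. If $\varepsilon(\eta_0(-1))^{e/2}=1$, then $\mathcal{C}_f'$ has parameters $[p^e+e+2,\ e+2,\ p^e-p^{e-1}-(p-1)p^{\frac e2-1}+2]$; if $\varepsilon(\eta_0(-1))^{e/2}=-1$, then $\mathcal{C}_f'$ has parameters $[p^e+e+2,\ e+2,\ p^e-p^{e-1}-p^{\frac e2-1}+1]$. Moreover, $\mathcal{C}_f'^{\perp}$ has parameters $[p^e+e+2,\ p^e,\ 3]$ and is at least almost optimal according to the sphere-packing bound.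
   Context: $\zeta_p=e^{2\pi i/p}$; $\mathrm{Tr}_{q/p}$ is the trace map from $\mathbb{F}_q$ to $\mathbb{F}_p$; $\eta_0$ is the quadratic character of $\mathbb{F}_p$; $p^*=(-1)^{(p-1)/2}p$ with $\sqrt{p^*}=\sqrt p$ if $p\equiv1\pmod 4$ and $\sqrt{-1}\sqrt p$ otherwise. Walsh transform of $f:\mathbb{F}_{p^e}\to\mathbb{F}_p$: $W_f(\beta)=\sum_x\zeta_p^{f(x)-\mathrm{Tr}_{p^e/p}(\beta x)}$; $f$ is weakly regular bent with sign $\varepsilon\in\{\pm1\}$ and dual $f^*:\mathbb{F}_{p^e}\to\mathbb{F}_p$ if $W_f(\beta)=\varepsilon\sqrt{p^*}^e\zeta_p^{f^*(\beta)}$ for all $\beta$. $\mathcal{RF}$ is the set of weakly regular bent $f$ with $f(0)=0$ and $f(ax)=a^hf(x)$ for all $a\in\mathbb{F}_p^*$, $x$, for some positive even $h$ with $\gcd(h-1,p-1)=1$. $G_2$ generates $\{(af(x)+\mathrm{Tr}_{q/p}(bx)+c)_{x\in\mathbb{F}_q}:a,c\in\mathbb{F}_p,b\in\mathbb{F}_q\}$. "At least almost optimal according to the sphere-packing bound" means the sphere-packing bound rules out a code with the same length and dimension and minimum distance $d+2$ (so the code is optimal or almost optimal). *)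

theory Defs
  imports Complex_Main "HOL-Number_Theory.Number_Theory"
begin

text \<open>The finite field F_q is modelled by a finite field type 'a with CARD('a) = p^e;
  F_p is its prime subfield, the image of the naturals.\<close>

definition Fp :: "'a::field set" where
  "Fp = range of_nat"

definition toZ :: "'a::field \<Rightarrow> nat" where
  "toZ y = (LEAST k. of_nat k = y)"

definition zeta :: "nat \<Rightarrow> complex" where
  "zeta p = cis (2 * pi / real p)"

definition tr :: "nat \<Rightarrow> nat \<Rightarrow> 'a::field \<Rightarrow> 'a" where
  "tr p e x = (\<Sum>i<e. x ^ (p ^ i))"

definition walsh :: "nat \<Rightarrow> nat \<Rightarrow> ('a::{finite,field} \<Rightarrow> 'a) \<Rightarrow> 'a \<Rightarrow> complex" where
  "walsh p e f b = (\<Sum>x\<in>UNIV. zeta p ^ toZ (f x - tr p e (b * x)))"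

definition sqrt_pstar :: "nat \<Rightarrow> complex" where
  "sqrt_pstar p = (if p mod 4 = 1 then complex_of_real (sqrt (real p))
                   else \<i> * complex_of_real (sqrt (real p)))"

definition weakly_regular_bent ::
  "nat \<Rightarrow> nat \<Rightarrow> ('a::{finite,field} \<Rightarrow> 'a) \<Rightarrow> int \<Rightarrow> ('a \<Rightarrow> 'a) \<Rightarrow> bool" where
  "weakly_regular_bent p e f \<epsilon> fstar \<longleftrightarrow>
     (\<forall>x. f x \<in> Fp) \<and> (\<forall>x. fstar x \<in> Fp) \<and> (\<epsilon> = 1 \<or> \<epsilon> = -1) \<and>
     (\<forall>b. walsh p e f b = of_int \<epsilon> * sqrt_pstar p ^ e * zeta p ^ toZ (fstar b))"

definition in_RF :: "nat \<Rightarrow> nat \<Rightarrow> ('a::{finite,field} \<Rightarrow> 'a) \<Rightarrow> bool" where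
  "in_RF p e f \<longleftrightarrow>
     (\<exists>\<epsilon> fstar. weakly_regular_bent p e f \<epsilon> fstar) \<and> f 0 = 0 \<and>
     (\<exists>h::nat. h > 0 \<and> even h \<and> gcd (h - 1) (p - 1) = 1 \<and>
        (\<forall>a\<in>Fp - {0}. \<forall>x. f (a * x) = a ^ h * f x))"

text \<open>Codewords of length n: functions nat => 'a vanishing outside {0..<n}.\<close>
definition hweight :: "nat \<Rightarrow> (nat \<Rightarrow> 'a::zero) \<Rightarrow> nat" where
  "hweight n c = card {i. i < n \<and> c i \<noteq> 0}"

definition row_code :: "nat \<Rightarrow> nat \<Rightarrow> (nat \<Rightarrow> nat \<Rightarrow> 'a::field) \<Rightarrow> (nat \<Rightarrow> 'a) set" where
  "row_code m n G = {(\<lambda>j. if j < n then (\<Sum>r<m. a r * G r j) else 0) | a. \<forall>r<m. a r \<in> Fp}"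

definition dual_code :: "nat \<Rightarrow> (nat \<Rightarrow> 'a::field) set \<Rightarrow> (nat \<Rightarrow> 'a) set" where
  "dual_code n C = {v. (\<forall>j<n. v j \<in> Fp) \<and> (\<forall>j\<ge>n. v j = 0) \<and>
                        (\<forall>c\<in>C. (\<Sum>j<n. v j * c j) = 0)}"

definition code_params :: "nat \<Rightarrow> (nat \<Rightarrow> 'a::field) set \<Rightarrow> nat \<Rightarrow> nat \<Rightarrow> nat \<Rightarrow> bool" where
  "code_params p C n k d \<longleftrightarrow>
     (\<forall>c\<in>C. (\<forall>j<n. c j \<in> Fp) \<and> (\<forall>j\<ge>n. c j = 0)) \<and>
     card C = p ^ k \<and>
     d = Min (hweight n ` (C - {\<lambda>_. 0}))"

definition sphere_packing_rules_out :: "nat \<Rightarrow> nat \<Rightarrow> nat \<Rightarrow> nat \<Rightarrow> bool" where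
  "sphere_packing_rules_out p n k d \<longleftrightarrow>
     p ^ k * (\<Sum>i\<le>(d - 1) div 2. (n choose i) * (p - 1) ^ i) > p ^ n"

text \<open>The generator matrix G_2' = [I_{e+2} : G_2] (0-based rows and columns).
  d enumerates F_q by positions 0..q-1 (so d_j of the paper is d (j-1)).\<close>
definition G2' :: "nat \<Rightarrow> nat \<Rightarrow> ('a::field \<Rightarrow> 'a) \<Rightarrow> 'a \<Rightarrow> (nat \<Rightarrow> 'a) \<Rightarrow> nat \<Rightarrow> nat \<Rightarrow> 'a" where
  "G2' p e f \<beta> d r c =
     (if c < e + 2 then (if r = c then 1 else 0)
      else if c < p ^ e + e + 2 then
        (let x = d (c - (e + 2)) in
          if r = 0 then 1 else if r = 1 then f x + 1 else tr p e (\<beta> ^ (r - 2) * x))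
      else 0)"

end

theory Submission
  imports Defs "HOL-Computational_Algebra.Polynomial_Factorial" "HOL-Library.FuncSet"
begin

definition cycl :: "nat \<Rightarrow> int poly" where "cycl p = (\<Sum>k<p. monom 1 k)"

lemma map_poly_of_int_add:
  "map_poly (of_int :: int \<Rightarrow> 'a::comm_ring_1) (A + B) = map_poly of_int A + map_poly of_int B"
  by (rule poly_eqI) (simp add: coeff_map_poly)

lemma map_poly_of_int_diff:
  "map_poly (of_int :: int \<Rightarrow> 'a::comm_ring_1) (A - B) = map_poly of_int A - map_poly of_int B"
  by (rule poly_eqI) (simp add: coeff_map_poly)

lemma map_poly_of_int_mult:
  "map_poly (of_int :: int \<Rightarrow> 'a::comm_ring_1) (A * B) = map_poly of_int A * map_poly of_int B"
  by (rule poly_eqI) (simp add: coeff_map_poly coeff_mult)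

lemma map_poly_of_int_smult:
  "map_poly (of_int :: int \<Rightarrow> 'a::comm_ring_1) (smult c A) = smult (of_int c) (map_poly of_int A)"
  by (rule poly_eqI) (simp add: coeff_map_poly)

lemma map_poly_of_int_const:
  "map_poly (of_int :: int \<Rightarrow> 'a::comm_ring_1) [:c:] = [:of_int c:]"
  by (rule poly_eqI) (simp add: coeff_map_poly coeff_pCons split: nat.splits)

lemma coeff_cycl: "coeff (cycl p) n = (if n < p then 1 else 0)"
  by (simp add: cycl_def coeff_sum coeff_monom)

lemma degree_cycl: assumes "p \<ge> 1" shows "degree (cycl p) = p - 1"
proof (rule antisym)
  show "degree (cycl p) \<le> p - 1" by (rule degree_le) (auto simp: coeff_cycl)
  show "p - 1 \<le> degree (cycl p)" by (rule le_degree) (use assms in \<open>simp add: coeff_cycl\<close>)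
qed

lemma poly_cycl: "poly (cycl p) x = (\<Sum>k<p. x ^ k)"
  by (simp add: cycl_def poly_sum poly_monom)

lemma map_cycl: "map_poly (of_int :: int \<Rightarrow> 'a::comm_ring_1) (cycl p) = (\<Sum>k<p. monom 1 k)"
  by (rule poly_eqI) (simp add: coeff_map_poly coeff_cycl coeff_sum coeff_monom)

lemma poly_map_cycl: "poly (map_poly (of_int :: int \<Rightarrow> 'a::comm_ring_1) (cycl p)) x = (\<Sum>k<p. x ^ k)"
  by (simp add: map_cycl poly_sum poly_monom)

definition cshift :: "nat \<Rightarrow> int poly" where "cshift p = pcompose (cycl p) [:1,1:]"

lemma cshift_mult_x: "[:0,1:] * cshift p = [:1,1:] ^ p - 1"
proof -
  have "poly ([:0,1:] * cshift p) x = poly ([:1,1:] ^ p - 1) x" for x :: int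
  proof -
    have "poly ([:0,1:] * cshift p) x = ((x+1) - 1) * (\<Sum>k<p. (x+1) ^ k)"
      by (simp add: cshift_def poly_pcompose poly_cycl algebra_simps)
    also have "\<dots> = (x+1)^p - 1" by (simp add: power_diff_1_eq)
    finally show ?thesis by (simp add: algebra_simps)
  qed
  thus ?thesis using poly_eq_poly_eq_iff by blast
qed

lemma coeff_cshift: "coeff (cshift p) k = int (p choose Suc k)"
proof -
  have "coeff (cshift p) k = coeff ([:0,1:] * cshift p) (Suc k)"
    by simp
  also have "\<dots> = coeff ([:1,1:] ^ p - 1) (Suc k)"
    by (simp only: cshift_mult_x)
  also have "\<dots> = coeff ([:1,1:] ^ p) (Suc k)"
    by simp
  also have "\<dots> = int (p choose Suc k)"
  proof (cases "Suc k \<le> p")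
    case True thus ?thesis by (simp add: coeff_linear_poly_power)
  next
    case False
    hence "coeff ([:1::int,1:] ^ p) (Suc k) = 0"
      by (intro coeff_eq_0) (simp add: degree_linear_power)
    thus ?thesis using False by simp
  qed
  finally show ?thesis .
qed

lemma degree_cshift: assumes "p \<ge> 1" shows "degree (cshift p) = p - 1"
  using assms by (simp add: cshift_def degree_pcompose degree_cycl)

lemma eis_aux:
  fixes G H :: "int poly"
  assumes p: "prime p" and GH: "G * H = cshift p" and dG: "degree G \<ge> 1" and dH: "degree H \<ge> 1"
    and d0: "int p dvd coeff G 0"
  shows False
proof -
  have p1: "p \<ge> 2" using p prime_ge_2_nat by blast
  have G0: "G \<noteq> 0" "H \<noteq> 0" using dG dH by auto
  have deg: "degree G + degree H = p - 1"
    using degree_mult_eq[OF G0] GH degree_cshift[of p] p1 by simp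
  have "lead_coeff (cshift p) = 1" using degree_cshift[of p] coeff_cshift[of p "p - 1"] p1 by simp
  hence "lead_coeff G * lead_coeff H = 1"
    using lead_coeff_mult[of G H] GH by simp
  hence ndl: "\<not> int p dvd lead_coeff G"
  proof -
    assume lc1: "lead_coeff G * lead_coeff H = 1"
    show ?thesis
    proof
      assume "int p dvd lead_coeff G"
      hence "int p dvd 1" using lc1 by (metis dvd_mult2)
      thus False using p1 by simp
    qed
  qed
  have c0: "coeff G 0 * coeff H 0 = int p"
    using coeff_mult[of G H 0] GH coeff_cshift[of p 0] by simp
  have ndH0: "\<not> int p dvd coeff H 0"
  proof
    assume "int p dvd coeff H 0"
    hence "int p * int p dvd int p" using c0 d0 by (metis mult_dvd_mono)
    thus False using p1 by simp
  qed
  define r where "r = (LEAST i. \<not> int p dvd coeff G i)"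
  have rex: "\<not> int p dvd coeff G r" unfolding r_def by (rule LeastI) (rule ndl)
  have rle: "r \<le> degree G" unfolding r_def by (rule Least_le) (rule ndl)
  have below: "int p dvd coeff G i" if "i < r" for i
    using not_less_Least[OF that[unfolded r_def]] by blast
  have rpos: "r \<noteq> 0"
  proof
    assume "r = 0" thus False using rex d0 by simp
  qed
  have "coeff (cshift p) r = (\<Sum>i\<le>r. coeff G i * coeff H (r - i))"
    using coeff_mult[of G H r] GH by simp
  also have "\<dots> = coeff G r * coeff H 0 + (\<Sum>i<r. coeff G i * coeff H (r - i))"
    by (simp add: lessThan_Suc_atMost[symmetric])
  finally have eq: "coeff (cshift p) r = coeff G r * coeff H 0 + (\<Sum>i<r. coeff G i * coeff H (r - i))" .
  have d1: "int p dvd coeff (cshift p) r"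
  proof -
    have "Suc r < p" using rle deg dH by linarith
    hence "p dvd p choose Suc r" using p by (intro dvd_choose_prime) auto
    thus ?thesis by (simp add: coeff_cshift)
  qed
  have d2: "int p dvd (\<Sum>i<r. coeff G i * coeff H (r - i))"
    by (intro dvd_sum) (simp add: below)
  have "int p dvd coeff G r * coeff H 0"
  proof -
    have "coeff G r * coeff H 0 = coeff (cshift p) r - (\<Sum>i<r. coeff G i * coeff H (r - i))"
      using eq by simp
    thus ?thesis using d1 d2 by (simp add: dvd_diff)
  qed
  moreover have "prime (int p)" using p by simp
  ultimately show False using rex ndH0 prime_dvd_mult_iff by blast
qed

lemma cycl_irreducible:
  assumes p: "prime p"
  shows "irreducible (cycl p)"
proof (rule irreducibleI)
  have p1: "p \<ge> 2" using p prime_ge_2_nat by blast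
  have dc: "degree (cycl p) = p - 1" using degree_cycl p1 by simp
  have "degree (cycl p) \<ge> 1" using dc p1 by simp
  thus "cycl p \<noteq> 0" by auto
  show "\<not> is_unit (cycl p)"
    using dc p1 by (auto simp: is_unit_poly_iff)
  fix G H assume GH: "cycl p = G * H"
  have lc: "lead_coeff G * lead_coeff H = 1"
    using lead_coeff_mult[of G H] GH dc coeff_cycl[of p "p-1"] p1 by simp
  show "is_unit G \<or> is_unit H"
  proof (rule ccontr)
    assume nu: "\<not> (is_unit G \<or> is_unit H)"
    have dG: "degree G \<ge> 1"
    proof (rule ccontr)
      assume "\<not> degree G \<ge> 1"
      hence "degree G = 0" by simp
      then obtain g where "G = [:g:]" by (elim degree_eq_zeroE)
      moreover have "g dvd 1"
      proof (rule dvdI)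
        show "1 = g * lead_coeff H" using lc \<open>G = [:g:]\<close> by simp
      qed
      ultimately show False using nu by (auto simp: is_unit_poly_iff)
    qed
    have dH: "degree H \<ge> 1"
    proof (rule ccontr)
      assume "\<not> degree H \<ge> 1"
      hence "degree H = 0" by simp
      then obtain g where "H = [:g:]" by (elim degree_eq_zeroE)
      moreover have "g dvd 1"
      proof (rule dvdI)
        show "1 = g * lead_coeff G" using lc \<open>H = [:g:]\<close> by (simp add: mult.commute)
      qed
      ultimately show False using nu by (auto simp: is_unit_poly_iff)
    qed
    define G' where "G' = pcompose G [:1,1:]"
    define H' where "H' = pcompose H [:1,1:]"
    have GH': "G' * H' = cshift p" unfolding G'_def H'_def cshift_def GH by (simp add: pcompose_mult)
    have dG': "degree G' \<ge> 1" "degree H' \<ge> 1"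
      using dG dH by (simp_all add: G'_def H'_def degree_pcompose)
    have "coeff G' 0 * coeff H' 0 = int p"
      using coeff_mult[of G' H' 0] GH' coeff_cshift[of p 0] by simp
    hence "int p dvd coeff G' 0 * coeff H' 0" by simp
    hence "int p dvd coeff G' 0 \<or> int p dvd coeff H' 0"
      using p by (simp add: prime_dvd_mult_iff)
    thus False
    proof
      assume "int p dvd coeff G' 0" thus False using eis_aux[OF p GH' dG'] by blast
    next
      assume "int p dvd coeff H' 0" thus False using eis_aux[OF p _ dG'(2) dG'(1)] GH'
        by (simp add: mult.commute)
    qed
  qed
qed

lemma no_small_root:
  fixes z :: "'a::field_char_0"
  assumes p: "prime p" and z: "poly (map_poly of_int (cycl p)) z = 0"
  shows "B \<noteq> 0 \<Longrightarrow> degree B < p - 1 \<Longrightarrow> poly (map_poly of_int B) z = 0 \<Longrightarrow> False"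
proof (induction "degree B" arbitrary: B rule: less_induct)
  case less
  have pr: "prime_elem (cycl p)" using cycl_irreducible[OF p] by (rule irreducible_imp_prime_elem)
  have p1: "p \<ge> 2" using p prime_ge_2_nat by blast
  have dc: "degree (cycl p) = p - 1" using degree_cycl p1 by simp
  have c0: "cycl p \<noteq> 0" using pr by auto
  define r where "r = pseudo_mod (cycl p) B"
  obtain c Q where cQ: "c \<noteq> 0" "smult c (cycl p) = B * Q + r"
    using pseudo_mod(1)[OF less.prems(1)] r_def by blast
  have rd: "r = 0 \<or> degree r < degree B" using pseudo_mod(2)[OF less.prems(1)] r_def by blast
  have "poly (map_poly of_int (smult c (cycl p))) z = poly (map_poly of_int (B * Q + r)) z"
    using cQ by simp
  hence "poly (map_poly of_int r) (z::'a) = 0"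
    using z less.prems(3) by (simp add: map_poly_of_int_smult map_poly_of_int_add map_poly_of_int_mult)
  hence evr: "poly (map_poly of_int r) (z::'a) = 0" .
  have r0: "r = 0"
  proof (rule ccontr)
    assume rn: "r \<noteq> 0"
    hence dr: "degree r < degree B" using rd by blast
    hence "degree r < p - 1" using less.prems(2) by linarith
    thus False using less.hyps[OF dr rn _ evr] by blast
  qed
  have "cycl p dvd smult c (cycl p)" by (rule dvd_smult) simp
  hence "cycl p dvd B * Q" using cQ r0 by simp
  hence "cycl p dvd B \<or> cycl p dvd Q" using pr prime_elem_dvd_mult_iff by blast
  thus False
  proof
    assume "cycl p dvd B"
    hence "degree (cycl p) \<le> degree B" using less.prems(1) by (rule dvd_imp_degree_le)
    thus False using dc less.prems(2) by simp
  next
    assume "cycl p dvd Q"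
    then obtain Q' where Q': "Q = cycl p * Q'" by (elim dvdE)
    have "[:c:] * cycl p = (B * Q') * cycl p" using cQ r0 Q' by (simp add: ac_simps)
    hence BQ: "[:c:] = B * Q'" using c0 mult_right_cancel by blast
    hence "Q' \<noteq> 0" using cQ by auto
    have "degree (B * Q') = 0" using BQ[symmetric] by simp
    hence "degree B = 0" using degree_mult_eq[OF less.prems(1) \<open>Q' \<noteq> 0\<close>] by linarith
    then obtain b where "B = [:b:]" by (elim degree_eq_zeroE)
    thus False using less.prems(1,3) by (simp add: map_poly_of_int_const)
  qed
qed

lemma cyclo_indep:
  fixes a :: "nat \<Rightarrow> int" and z :: complex
  assumes p: "prime p" and z: "z ^ p = 1" "z \<noteq> 1"
    and s: "(\<Sum>k<p. of_int (a k) * z ^ k) = 0"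
  shows "\<forall>k<p. a k = a 0"
proof -
  have p1: "p \<ge> 2" using p prime_ge_2_nat by blast
  have sz: "(\<Sum>k<p. z ^ k) = 0"
    using power_diff_1_eq[of z p] z by simp
  define A where "A = (\<Sum>k<p. monom (a k - a (p - 1)) k)"
  have cA: "coeff A i = (if i < p then a i - a (p - 1) else 0)" for i
    by (simp add: A_def coeff_sum coeff_monom)
  have dA: "degree A \<le> p - 2"
  proof (rule degree_le, intro allI impI)
    fix i assume "p - 2 < i"
    hence "i = p - 1 \<or> i \<ge> p" by auto
    thus "coeff A i = 0" using cA by auto
  qed
  have "poly (map_poly of_int A) z = (\<Sum>k<p. of_int (a k - a (p - 1)) * z ^ k)"
  proof -
    have "map_poly of_int A = (\<Sum>k<p. monom (of_int (a k - a (p - 1)) :: complex) k)"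
      by (rule poly_eqI) (simp add: coeff_map_poly cA coeff_sum coeff_monom)
    thus ?thesis by (simp add: poly_sum poly_monom)
  qed
  also have "\<dots> = (\<Sum>k<p. of_int (a k) * z ^ k) - of_int (a (p - 1)) * (\<Sum>k<p. z ^ k)"
    by (simp add: left_diff_distrib sum_subtractf sum_distrib_left)
  also have "\<dots> = 0" using s sz by simp
  finally have ev: "poly (map_poly of_int A) z = 0" .
  have zc: "poly (map_poly of_int (cycl p)) z = 0" using sz by (simp add: poly_map_cycl)
  have "A = 0"
  proof (rule ccontr)
    assume "A \<noteq> 0"
    moreover have "degree A < p - 1" using dA p1 by linarith
    ultimately show False using no_small_root[OF p zc] ev by blast
  qed
  hence h: "a k = a (p - 1)" if "k < p" for k using cA[of k] that by simp
  show ?thesis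
  proof (intro allI impI)
    fix k assume "k < p" thus "a k = a 0" using h[of k] h[of 0] p1 by simp
  qed
qed

locale S =
  fixes p e :: nat and f :: "'a::{finite,field} \<Rightarrow> 'a" and \<epsilon> :: int
    and fstar :: "'a \<Rightarrow> 'a" and \<beta> :: 'a and d :: "nat \<Rightarrow> 'a"
  assumes prime: "prime p" and oddp: "odd p" and e2: "e \<ge> 2" and eve: "even e"
    and card: "card (UNIV::'a set) = p ^ e"
    and RF: "in_RF p e f"
    and wrb: "weakly_regular_bent p e f \<epsilon> fstar"
    and b0: "\<beta> \<noteq> 0" and gen: "\<forall>x::'a. x \<noteq> 0 \<longrightarrow> (\<exists>k::nat. x = \<beta> ^ k)"
    and dbij: "bij_betw d {0..<p ^ e} UNIV" and dlast: "d (p ^ e - 1) = 0"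
begin

lemma p3: "p \<ge> 3"
proof -
  have "p \<ge> 2" using prime_ge_2_nat[OF prime] .
  moreover have "p \<noteq> 2" using oddp by auto
  ultimately show ?thesis by linarith
qed

lemma card_zero: "of_nat (card (UNIV::'a set)) = (0::'a)"
proof -
  have "(\<Sum>y\<in>(UNIV::'a set). 1 + y) = (\<Sum>y\<in>(\<lambda>y. 1 + y) ` UNIV. y)"
    by (subst sum.reindex) (auto simp: inj_on_def)
  also have "(\<lambda>y. (1::'a) + y) ` UNIV = UNIV"
    by (rule surjI[of _ "\<lambda>y. y - 1"]) simp
  finally have "(\<Sum>y\<in>(UNIV::'a set). 1 + y) = (\<Sum>y\<in>UNIV. y)" .
  thus ?thesis by (simp add: sum.distrib)
qed

lemma CHAR: "CHAR('a) = p"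
proof -
  have "of_nat (p ^ e) = (0::'a)" using card_zero card by simp
  hence "CHAR('a) dvd p ^ e" by (simp only: of_nat_eq_0_iff_char_dvd[where 'a='a])
  moreover have pos: "CHAR('a) > 0" by (rule finite_imp_CHAR_pos) simp
  have pc: "prime CHAR('a)" by (rule prime_CHAR_semidom[OF pos])
  ultimately have "CHAR('a) dvd p" using prime_dvd_power[OF pc] by blast
  thus ?thesis using primes_dvd_imp_eq[OF pc prime] by blast
qed

lemma primeC: "prime CHAR('a)" using CHAR prime by simp

lemma ofnat0: "of_nat k = (0::'a) \<longleftrightarrow> p dvd k"
  using of_nat_eq_0_iff_char_dvd[where 'a='a] CHAR by simp

lemma ofnat_eq: "of_nat i = (of_nat j::'a) \<longleftrightarrow> [i = j] (mod p)"
  using of_nat_eq_iff_cong_CHAR[where 'a='a] CHAR by simp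

lemma inj_Fp: "inj_on (of_nat :: nat \<Rightarrow> 'a) {..<p}"
  by (auto simp: inj_on_def ofnat_eq cong_def)

lemma of_nat_mod: "(of_nat (k mod p) :: 'a) = of_nat k"
  by (simp add: ofnat_eq cong_def)

lemma Fp_eq: "(Fp :: 'a set) = of_nat ` {..<p}"
proof -
  have "of_nat k \<in> (of_nat ` {..<p} :: 'a set)" for k
    using of_nat_mod[of k] prime prime_gt_0_nat by (metis imageI lessThan_iff mod_less_divisor)
  thus ?thesis unfolding Fp_def by auto
qed

lemma card_Fp: "card (Fp :: 'a set) = p"
  using Fp_eq inj_Fp card_image by fastforce

lemma Fp_ex: "y \<in> (Fp::'a set) \<Longrightarrow> \<exists>k<p. y = of_nat k"
  using Fp_eq by auto

lemma Fp_0[simp]: "(0::'a) \<in> Fp" and Fp_1[simp]: "(1::'a) \<in> Fp"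
  unfolding Fp_def by (metis rangeI of_nat_0, metis rangeI of_nat_1)

lemma Fp_of_nat[simp]: "(of_nat k::'a) \<in> Fp" unfolding Fp_def by simp

lemma Fp_add[simp]: "x \<in> Fp \<Longrightarrow> y \<in> Fp \<Longrightarrow> x + (y::'a) \<in> Fp"
proof -
  assume "x \<in> Fp" "y \<in> Fp"
  then obtain a b where "x = of_nat a" "y = of_nat b" unfolding Fp_def by auto
  hence "x + y = of_nat (a + b)" by simp
  thus ?thesis by (simp only: Fp_of_nat)
qed

lemma Fp_mult[simp]: "x \<in> Fp \<Longrightarrow> y \<in> Fp \<Longrightarrow> x * (y::'a) \<in> Fp"
proof -
  assume "x \<in> Fp" "y \<in> Fp"
  then obtain a b where "x = of_nat a" "y = of_nat b" unfolding Fp_def by auto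
  hence "x * y = of_nat (a * b)" by simp
  thus ?thesis by (simp only: Fp_of_nat)
qed

lemma Fp_uminus[simp]: "x \<in> Fp \<Longrightarrow> - (x::'a) \<in> Fp"
proof -
  assume "x \<in> Fp"
  then obtain k where k: "x = of_nat k" unfolding Fp_def by auto
  have "(of_nat (p * k - k) :: 'a) = of_nat (p * k) - of_nat k"
    using p3 by (intro of_nat_diff) simp
  also have "(of_nat (p * k) :: 'a) = 0" by (simp add: ofnat0)
  finally show ?thesis using k by (metis Fp_of_nat diff_0)
qed

lemma Fp_diff[simp]: "x \<in> Fp \<Longrightarrow> y \<in> Fp \<Longrightarrow> x - (y::'a) \<in> Fp"
  by (metis Fp_add Fp_uminus diff_conv_add_uminus)

lemma Fp_power[simp]: "x \<in> Fp \<Longrightarrow> (x::'a) ^ k \<in> Fp"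
  by (induction k) auto

lemma Fp_sum[simp]: "(\<And>i. i \<in> A \<Longrightarrow> g i \<in> Fp) \<Longrightarrow> sum g A \<in> (Fp::'a set)"
  by (induction A rule: infinite_finite_induct) auto

lemma frob: "(x + y :: 'a) ^ (p ^ i) = x ^ (p ^ i) + y ^ (p ^ i)"
  using freshmans_dream'[OF primeC, of "p ^ i" i] CHAR by simp

lemma frob_sum: "(sum g A :: 'a) ^ (p ^ i) = (\<Sum>j\<in>A. g j ^ (p ^ i))"
  using freshmans_dream_sum'[OF primeC, of "p ^ i" i] CHAR by simp

lemma frob1: "(x + y :: 'a) ^ p = x ^ p + y ^ p"
  using frob[of x y 1] by simp

lemma Fp_pow_p: "x \<in> Fp \<Longrightarrow> (x::'a) ^ p = x"
proof -
  assume "x \<in> Fp"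
  then obtain k where k: "x = of_nat k" unfolding Fp_def by auto
  have "(of_nat k :: 'a) ^ p = of_nat k"
  proof (induction k)
    case 0 thus ?case using p3 by simp
  next
    case (Suc k) thus ?case using frob1[of "of_nat k" 1] by (simp add: add.commute)
  qed
  thus ?thesis using k by simp
qed

lemma Fp_pow_pi: "x \<in> Fp \<Longrightarrow> (x::'a) ^ (p ^ i) = x"
proof (induction i)
  case (Suc i)
  have "x ^ (p ^ Suc i) = (x ^ (p ^ i)) ^ p" by (simp add: power_mult[symmetric] mult.commute)
  thus ?case using Suc Fp_pow_p by simp
qed simp

lemma Fp_inverse[simp]: "x \<in> Fp \<Longrightarrow> inverse (x::'a) \<in> Fp"
proof (cases "x = 0")
  case False
  assume x: "x \<in> Fp"
  have e1: "p - 1 = Suc (p - 2)" using p3 by simp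
  have e2: "p = Suc (p - 1)" using p3 by simp
  have "x * x ^ (p - 2) = x ^ (p - 1)" by (subst e1) simp
  moreover have "x * x ^ (p - 1) = x * 1" using Fp_pow_p[OF x] by (subst (asm) e2) simp
  ultimately have "x ^ (p - 2) = inverse x" using False
    by (metis mult_left_cancel inverse_unique)
  thus ?thesis using x Fp_power by metis
qed simp

lemma Fp_divide[simp]: "x \<in> Fp \<Longrightarrow> y \<in> Fp \<Longrightarrow> x / (y::'a) \<in> Fp"
  by (simp add: divide_inverse)

lemma pow_card: "(x::'a) ^ (p ^ e) = x"
proof (cases "x = 0")
  case False
  have "x * (\<Prod>y\<in>UNIV-{0}. x * y) = x * x ^ (card (UNIV :: 'a set) - 1) * \<Prod>(UNIV-{0})"
    by (simp add: prod.distrib mult_ac)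
  also have "x * x ^ (card (UNIV :: 'a set) - 1) = x ^ Suc (card (UNIV :: 'a set) - 1)"
    by (subst power_Suc) auto
  also have "Suc (card (UNIV :: 'a set) - 1) = card (UNIV :: 'a set)"
    using finite_UNIV_card_ge_0[where ?'a = 'a] by simp
  also have "(\<Prod>y\<in>UNIV-{0}. x * y) = (\<Prod>y\<in>UNIV-{0}. y)"
    by (rule prod.reindex_bij_witness[of _ "\<lambda>y. y / x" "\<lambda>y. x * y"]) (use False in auto)
  finally show ?thesis
    using card by simp
qed (use prime in \<open>simp add: prime_gt_0_nat\<close>)

lemma roots_p: "{y::'a. y ^ p = y} = Fp"
proof -
  define P where "P = monom (1::'a) p - monom 1 1"
  have cP: "coeff P p = 1" using p3 by (simp add: P_def)
  hence P0: "P \<noteq> 0" by auto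
  have dP: "degree P \<le> p" unfolding P_def
    by (rule degree_le) (use p3 in \<open>auto simp: coeff_monom\<close>)
  have "{y::'a. y ^ p = y} = {y. poly P y = 0}" by (auto simp: P_def poly_monom)
  hence c: "card {y::'a. y ^ p = y} \<le> p" using card_poly_roots_bound[OF P0] dP by simp
  have sub: "Fp \<subseteq> {y::'a. y ^ p = y}" using Fp_pow_p by auto
  show ?thesis
    using card_subset_eq[OF _ sub] c card_Fp card_mono[OF _ sub]
    by (metis finite antisym)
qed

lemma in_Fp_iff: "(y::'a) \<in> Fp \<longleftrightarrow> y ^ p = y"
  using roots_p by auto

lemma tr_add: "tr p e (x + y :: 'a) = tr p e x + tr p e y"
  by (simp add: tr_def frob sum.distrib)

lemma tr_zero[simp]: "tr p e (0::'a) = 0"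
  using prime by (simp add: tr_def prime_gt_0_nat power_0_left)

lemma tr_smult: "a \<in> Fp \<Longrightarrow> tr p e (a * x :: 'a) = a * tr p e x"
  by (simp add: tr_def power_mult_distrib Fp_pow_pi sum_distrib_left)

lemma tr_in_Fp: "tr p e (x::'a) \<in> Fp"
proof -
  define g where "g i = x ^ (p ^ i)" for i
  have "(tr p e x) ^ p = (\<Sum>i<e. g (Suc i))"
    using frob_sum[of "\<lambda>i. x ^ (p ^ i)" "{..<e}" 1]
    by (simp add: tr_def g_def power_mult[symmetric] mult.commute)
  also have "\<dots> = (\<Sum>i<e. g i)"
  proof -
    have "(\<Sum>i<Suc e. g i) = g 0 + (\<Sum>i<e. g (Suc i))" by (rule sum.lessThan_Suc_shift)
    moreover have "(\<Sum>i<Suc e. g i) = (\<Sum>i<e. g i) + g e" by simp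
    moreover have "g e = g 0" using pow_card by (simp add: g_def)
    ultimately show ?thesis by (simp add: add.commute)
  qed
  finally show ?thesis by (simp add: in_Fp_iff tr_def g_def)
qed

lemma tr_sum: "(\<And>i. i \<in> A \<Longrightarrow> c i \<in> Fp) \<Longrightarrow> tr p e (\<Sum>i\<in>A. c i * y i :: 'a) = (\<Sum>i\<in>A. c i * tr p e (y i))"
  by (induction A rule: infinite_finite_induct) (auto simp: tr_add tr_smult)

lemma tr_uminus: "tr p e (- x :: 'a) = - tr p e x"
  using tr_smult[of "-1" x] by simp

lemma tr_zeros: "card {x::'a. tr p e x + c = 0} \<le> p ^ (e - 1)"
proof -
  define T where "T = (\<Sum>i<e. monom (1::'a) (p ^ i)) + [:c:]"
  have pe: "p ^ (e - 1) > 0" using p3 by simp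
  have cc: "coeff [:c:] k = 0" if "k > 0" for k using that by (cases k) auto
  have inj: "p ^ i = p ^ j \<longleftrightarrow> i = j" for i j using p3 by (simp add: power_inject_exp)
  have cT: "coeff T (p ^ (e - 1)) = 1"
  proof -
    have "coeff T (p ^ (e - 1)) = (\<Sum>i<e. if p ^ i = p ^ (e - 1) then 1 else 0)"
      using pe by (simp add: T_def coeff_sum coeff_monom cc)
    also have "\<dots> = (\<Sum>i<e. if i = e - 1 then 1 else 0)" by (simp add: inj)
    also have "\<dots> = 1" using e2 by simp
    finally show ?thesis .
  qed
  hence T0: "T \<noteq> 0" by auto
  have dT: "degree T \<le> p ^ (e - 1)"
  proof (rule degree_le, intro allI impI)
    fix k assume k: "p ^ (e - 1) < k"
    have "p ^ i \<noteq> k" if "i < e" for i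
    proof -
      have "p ^ i \<le> p ^ (e - 1)" using that p3 by (intro power_increasing) auto
      thus ?thesis using k by simp
    qed
    thus "coeff T k = 0" using k pe by (simp add: T_def coeff_sum coeff_monom cc)
  qed
  have "{x::'a. tr p e x + c = 0} = {x. poly T x = 0}"
    by (simp add: T_def poly_sum poly_monom tr_def)
  thus ?thesis using card_poly_roots_bound[OF T0] dT by simp
qed

lemma tr_nonzero: "\<exists>x::'a. tr p e x \<noteq> 0"
proof (rule ccontr)
  assume "\<not> ?thesis"
  hence "{x::'a. tr p e x + 0 = 0} = UNIV" by auto
  hence "p ^ e \<le> p ^ (e - 1)" using tr_zeros[of 0] card by simp
  moreover have "p ^ (e - 1) < p ^ e" using p3 e2 by (intro power_strict_increasing) auto
  ultimately show False by simp
qed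

end

context S begin

lemma toZ: "y \<in> Fp \<Longrightarrow> toZ y < p \<and> of_nat (toZ y) = (y::'a)"
proof -
  assume "y \<in> Fp"
  then obtain k where k: "k < p" "y = of_nat k" using Fp_ex by blast
  have 1: "of_nat (toZ y) = y" unfolding toZ_def by (rule LeastI[of _ k]) (simp add: k)
  have "toZ y \<le> k" unfolding toZ_def by (rule Least_le) (simp add: k)
  thus ?thesis using 1 k by simp
qed

lemma toZ_of_nat: "k < p \<Longrightarrow> toZ (of_nat k :: 'a) = k"
  using toZ[of "of_nat k"] inj_Fp by (simp add: inj_on_def)

lemma zeta_p: "zeta p ^ p = 1"
proof -
  have "real p * (2 * pi / real p) = 2 * pi" using p3 by simp
  thus ?thesis unfolding zeta_def by (simp add: DeMoivre complex_eq_iff)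
qed

lemma zeta_ne1: "zeta p \<noteq> 1"
proof -
  have "2 * pi / real p < pi" using p3 by (simp add: field_simps)
  hence "sin (2 * pi / real p) > 0" using p3 by (intro sin_gt_zero) auto
  thus ?thesis unfolding zeta_def by (auto simp: complex_eq_iff)
qed

lemma sum_counts:
  fixes g :: "'a \<Rightarrow> 'a" and h :: "nat \<Rightarrow> 'b::comm_ring_1"
  assumes g: "\<forall>x. g x \<in> Fp"
  shows "(\<Sum>x\<in>UNIV. h (toZ (g x))) = (\<Sum>k<p. of_nat (card {x. g x = of_nat k}) * h k)"
proof -
  have "(\<Sum>x\<in>UNIV. h (toZ (g x))) = (\<Sum>x\<in>UNIV. \<Sum>k<p. if toZ (g x) = k then h k else 0)"
    using toZ g by (intro sum.cong) auto
  also have "\<dots> = (\<Sum>k<p. \<Sum>x\<in>UNIV. if toZ (g x) = k then h k else 0)" by (rule sum.swap)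
  also have "\<dots> = (\<Sum>k<p. of_nat (card {x. g x = of_nat k}) * h k)"
  proof (rule sum.cong)
    fix k assume k: "k \<in> {..<p}"
    have eq: "{x. toZ (g x) = k} = {x. g x = of_nat k}"
      using toZ g toZ_of_nat k by auto
    have "(\<Sum>x\<in>UNIV. if toZ (g x) = k then h k else 0) = (\<Sum>x\<in>{x\<in>UNIV. toZ (g x) = k}. h k)"
      by (rule sum.inter_filter[symmetric]) simp
    also have "\<dots> = of_nat (card {x. g x = of_nat k}) * h k" using eq by simp
    finally show "(\<Sum>x\<in>UNIV. if toZ (g x) = k then h k else 0) = of_nat (card {x. g x = of_nat k}) * h k" .
  qed simp
  finally show ?thesis .
qed

lemma Leg: "Legendre (-1) (int p) = (if p mod 4 = 1 then 1 else -1)"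
proof -
  have c: "[Legendre (-1) (int p) = (-1) ^ ((p - 1) div 2)] (mod int p)"
    using euler_criterion[OF prime, of "-1"] p3 by simp
  have nz: "\<not> [-1 = 0] (mod int p)"
  proof
    assume "[-1 = 0] (mod int p)"
    hence "int p dvd 1" by (simp add: cong_def mod_eq_0_iff_dvd)
    thus False using p3 by simp
  qed
  have L: "Legendre (-1) (int p) = 1 \<or> Legendre (-1) (int p) = -1"
    using nz by (simp add: Legendre_def)
  have pw: "(-1::int) ^ ((p - 1) div 2) = (if p mod 4 = 1 then 1 else -1)"
  proof -
    have "even ((p - 1) div 2) \<longleftrightarrow> p mod 4 = 1" using oddp by presburger
    thus ?thesis by (simp add: minus_one_power_iff)
  qed
  have no: "\<not> [1 = -1] (mod int p)"
  proof
    assume "[1 = -1] (mod int p)"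
    hence "int p dvd 2" by (simp add: cong_iff_dvd_diff)
    hence "p dvd 2" by presburger
    thus False using dvd_imp_le[of p 2] p3 by simp
  qed
  show ?thesis
  proof (cases "p mod 4 = 1")
    case True
    thus ?thesis using c L pw no by (auto simp: cong_sym)
  next
    case False
    thus ?thesis using c L pw no by (auto dest: cong_sym)
  qed
qed

lemma sqrt_pstar_sq: "sqrt_pstar p ^ 2 = of_int (Legendre (-1) (int p) * int p)"
proof (cases "p mod 4 = 1")
  case True
  thus ?thesis by (simp add: sqrt_pstar_def Leg power2_eq_square flip: of_real_mult)
next
  case False
  thus ?thesis by (simp add: sqrt_pstar_def Leg power2_eq_square algebra_simps flip: of_real_mult)
qed

lemma sqrt_pstar_e: "sqrt_pstar p ^ e = of_int (Legendre (-1) (int p) ^ (e div 2) * int p ^ (e div 2))"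
proof -
  have "e = 2 * (e div 2)" using eve by simp
  hence "sqrt_pstar p ^ e = (sqrt_pstar p ^ 2) ^ (e div 2)" by (metis power_mult)
  thus ?thesis by (simp add: sqrt_pstar_sq power_mult_distrib)
qed

definition "sgn0 = \<epsilon> * Legendre (-1) (int p) ^ (e div 2)"
definition "RR = sgn0 * int p ^ (e div 2)"
definition "C0 = (int (p ^ e) - RR) div int p"

lemma wrb': "(\<forall>x. f x \<in> Fp) \<and> (\<forall>x. fstar x \<in> Fp) \<and> (\<epsilon> = 1 \<or> \<epsilon> = -1) \<and>
     (\<forall>b. walsh p e f b = of_int \<epsilon> * sqrt_pstar p ^ e * zeta p ^ toZ (fstar b))"
  using wrb unfolding weakly_regular_bent_def .

lemma f_Fp[simp]: "f x \<in> Fp" and fstar_Fp[simp]: "fstar x \<in> Fp"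
  using wrb' by auto

lemma sgn0: "sgn0 = 1 \<or> sgn0 = -1"
proof -
  have "Legendre (-1) (int p) ^ (e div 2) = 1 \<or> Legendre (-1) (int p) ^ (e div 2) = -1"
    by (cases "p mod 4 = 1") (auto simp: Leg minus_one_power_iff)
  thus ?thesis using wrb' unfolding sgn0_def by auto
qed

lemma walsh_RR: "walsh p e f b = of_int RR * zeta p ^ toZ (fstar b)"
  using wrb' by (simp add: sqrt_pstar_e RR_def sgn0_def ac_simps)

lemma counts_aux:
  "(\<forall>j\<in>Fp. int (card {x. f x - tr p e (b * x) = j}) = C0 + (if j = fstar b then RR else 0))
    \<and> int p * C0 + RR = int (p ^ e)"
proof -
  define g where "g x = f x - tr p e (b * x)" for x
  have g: "\<forall>x. g x \<in> Fp" by (simp add: g_def tr_in_Fp)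
  define N where "N k = card {x. g x = of_nat k}" for k
  define t where "t = toZ (fstar b)"
  have t: "t < p" "of_nat t = fstar b" using toZ[of "fstar b"] by (auto simp: t_def)
  have "walsh p e f b = (\<Sum>x\<in>UNIV. zeta p ^ toZ (g x))" by (simp add: walsh_def g_def)
  also have "\<dots> = (\<Sum>k<p. of_nat (N k) * zeta p ^ k)"
    using sum_counts[OF g, of "\<lambda>k. zeta p ^ k"] by (simp add: N_def)
  finally have w1: "(\<Sum>k<p. of_nat (N k) * zeta p ^ k) = of_int RR * zeta p ^ t"
    using walsh_RR t_def by simp
  define a where "a k = int (N k) - (if k = t then RR else 0)" for k
  have "(\<Sum>k<p. of_int (a k) * zeta p ^ k) =
        (\<Sum>k<p. of_nat (N k) * zeta p ^ k - (if k = t then of_int RR * zeta p ^ k else 0))"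
    by (intro sum.cong) (auto simp: a_def algebra_simps)
  also have "\<dots> = (\<Sum>k<p. of_nat (N k) * zeta p ^ k) - (\<Sum>k<p. if k = t then of_int RR * zeta p ^ k else 0)"
    by (rule sum_subtractf)
  also have "\<dots> = 0" using w1 t by simp
  finally have "(\<Sum>k<p. of_int (a k) * zeta p ^ k) = 0" .
  hence aeq: "\<forall>k<p. a k = a 0" using cyclo_indep[OF prime zeta_p zeta_ne1] by blast
  have "(\<Sum>x\<in>(UNIV::'a set). (1::int)) = (\<Sum>k<p. of_nat (N k) * 1)"
    using sum_counts[OF g, of "\<lambda>k. 1::int"] by (simp add: N_def)
  hence sN: "(\<Sum>k<p. int (N k)) = int (p ^ e)" using card by simp
  have "(\<Sum>k<p. a k) = (\<Sum>k<p. int (N k)) - (\<Sum>k<p. if k = t then RR else 0)"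
    by (simp add: a_def sum_subtractf)
  also have "\<dots> = int (p ^ e) - RR" using sN t by simp
  finally have "(\<Sum>k<p. a k) = int (p ^ e) - RR" .
  moreover have "(\<Sum>k<p. a k) = (\<Sum>k<p. a 0)"
    by (rule sum.cong[OF refl]) (use aeq in blast)
  hence "(\<Sum>k<p. a k) = int p * a 0" by simp
  ultimately have pa: "int p * a 0 = int (p ^ e) - RR" by simp
  have "int p \<noteq> 0" using p3 by simp
  hence a0: "a 0 = C0" unfolding C0_def pa[symmetric] by simp
  have "int (card {x. f x - tr p e (b * x) = j}) = C0 + (if j = fstar b then RR else 0)" if j: "j \<in> Fp" for j
  proof -
    obtain k where k: "k < p" "j = of_nat k" using Fp_ex j by blast
    have kt: "(k = t) = (j = fstar b)" using inj_onD[OF inj_Fp, of k t] k t by auto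
    have Nk: "int (N k) = a k + (if k = t then RR else 0)" by (simp add: a_def)
    have cN: "card {x. f x - tr p e (b * x) = j} = N k" by (simp add: N_def g_def k(2))
    have "a k = a 0" using aeq k(1) by blast
    hence ak: "a k = C0" using a0 by simp
    show ?thesis using Nk cN ak kt by simp
  qed
  thus ?thesis using pa a0 by simp
qed

lemma counts: "j \<in> Fp \<Longrightarrow> int (card {x. f x - tr p e (b * x) = j}) = C0 + (if j = fstar b then RR else 0)"
  using counts_aux by blast

lemma C0_eq: "int p * C0 + RR = int (p ^ e)"
  using counts_aux by blast

end

context S begin

lemma RF': "f 0 = 0 \<and> (\<exists>h::nat. h > 0 \<and> (\<forall>a\<in>Fp - {0}. \<forall>x. f (a * x) = a ^ h * f x))"
  using RF unfolding in_RF_def by blast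

lemma zero_count: "\<exists>m. card {x::'a. f x = 0} = (p - 1) * m + 1"
proof -
  obtain h where h: "\<forall>a\<in>Fp - {0}. \<forall>x. f (a * x) = a ^ h * f x" using RF' by blast
  define Z where "Z = {x::'a. f x = 0 \<and> x \<noteq> 0}"
  define orb where "orb x = (\<lambda>a. a * x) ` (Fp - {0})" for x :: 'a
  define CC where "CC = orb ` Z"
  have U: "\<Union>CC = Z"
  proof
    show "\<Union>CC \<subseteq> Z" unfolding CC_def orb_def Z_def using h by auto
    show "Z \<subseteq> \<Union>CC"
    proof
      fix x assume "x \<in> Z"
      moreover have "x \<in> orb x" unfolding orb_def by (rule image_eqI[of _ _ 1]) auto
      ultimately show "x \<in> \<Union>CC" unfolding CC_def by blast
    qed
  qed
  have cardc: "\<forall>c\<in>CC. card c = p - 1"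
  proof
    fix c assume "c \<in> CC"
    then obtain x where x: "x \<in> Z" "c = orb x" unfolding CC_def by blast
    have "inj_on (\<lambda>a. a * x) (Fp - {0})" using x by (auto simp: inj_on_def Z_def)
    moreover have "c = (\<lambda>a. a * x) ` (Fp - {0})" using x by (simp add: orb_def)
    ultimately have "card c = card (Fp - {0::'a})" by (simp add: card_image)
    thus "card c = p - 1" using card_Fp by simp
  qed
  have sub: "orb x \<subseteq> orb y" if yn: "y \<noteq> 0" and xy: "x \<in> orb y" for x y
  proof
    fix z assume "z \<in> orb x"
    then obtain a where a: "a \<in> Fp" "a \<noteq> 0" "z = a * x" unfolding orb_def by blast
    obtain b where b: "b \<in> Fp" "b \<noteq> 0" "x = b * y" using xy unfolding orb_def by blast
    have "z = (a * b) * y" using a b by (simp add: mult.assoc)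
    moreover have "a * b \<in> Fp - {0}" using a b by simp
    ultimately show "z \<in> orb y" unfolding orb_def by blast
  qed
  have memorb: "y \<in> orb x \<Longrightarrow> x \<in> orb y" if "x \<noteq> 0" for x y
  proof -
    assume "y \<in> orb x"
    then obtain a where a: "a \<in> Fp" "a \<noteq> 0" "y = a * x" unfolding orb_def by blast
    have "x = inverse a * y" using a by simp
    moreover have "inverse a \<in> Fp - {0}" using a by simp
    ultimately show "x \<in> orb y" unfolding orb_def by blast
  qed
  have disj: "\<forall>c1\<in>CC. \<forall>c2\<in>CC. c1 \<noteq> c2 \<longrightarrow> c1 \<inter> c2 = {}"
  proof (intro ballI impI)
    fix c1 c2 assume c: "c1 \<in> CC" "c2 \<in> CC" "c1 \<noteq> c2"
    obtain x1 where x1: "x1 \<in> Z" "c1 = orb x1" using c unfolding CC_def by blast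
    obtain x2 where x2: "x2 \<in> Z" "c2 = orb x2" using c unfolding CC_def by blast
    have nz: "x1 \<noteq> 0" "x2 \<noteq> 0" using x1 x2 by (auto simp: Z_def)
    show "c1 \<inter> c2 = {}"
    proof (rule ccontr)
      assume "c1 \<inter> c2 \<noteq> {}"
      then obtain y where y: "y \<in> orb x1" "y \<in> orb x2" using x1 x2 by blast
      have ynz: "y \<noteq> 0" using y(1) nz unfolding orb_def by auto
      have "orb x1 = orb y"
        using sub[OF ynz memorb[OF nz(1) y(1)]] sub[OF nz(1) y(1)] by (rule subset_antisym)
      moreover have "orb x2 = orb y"
        using sub[OF ynz memorb[OF nz(2) y(2)]] sub[OF nz(2) y(2)] by (rule subset_antisym)
      ultimately show False using c x1 x2 by simp
    qed
  qed
  have "(p - 1) * card CC = card (\<Union>CC)"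
    by (rule card_partition) (use cardc disj in \<open>auto simp: CC_def\<close>)
  hence "card Z = (p - 1) * card CC" using U by simp
  moreover have "{x::'a. f x = 0} = insert 0 Z" using RF' by (auto simp: Z_def)
  moreover have "0 \<notin> Z" by (simp add: Z_def)
  ultimately have "card {x::'a. f x = 0} = (p - 1) * card CC + 1" by simp
  thus ?thesis by blast
qed

lemma fstar0: "fstar 0 = 0"
proof (rule ccontr)
  assume ne: "fstar 0 \<noteq> 0"
  obtain m where m: "card {x::'a. f x = 0} = (p - 1) * m + 1" using zero_count by blast
  have "int (card {x. f x - tr p e (0 * x) = 0}) = C0" using counts[of 0 0] ne by simp
  hence c: "C0 = int ((p - 1) * m + 1)" using m by simp
  have pp: "int p - 1 = int (p - 1)" using p3 by simp
  have c0': "C0 = int (p - 1) * int m + 1" using c by simp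
  have c': "C0 = (int p - 1) * int m + 1" unfolding pp by (rule c0')
  have "int p ^ e - 1 = (int p - 1) * (\<Sum>i<e. int p ^ i)" by (rule power_diff_1_eq)
  hence d1: "(int p - 1) dvd (int p ^ e - 1)" by simp
  have "RR = int p ^ e - int p * C0" using C0_eq by simp
  also have "\<dots> = (int p ^ e - 1) - (int p - 1) * (1 + int p * int m)"
    unfolding c' by (simp add: algebra_simps)
  finally have "(int p - 1) dvd RR" using d1 by (simp add: dvd_diff)
  moreover have "RR = int p ^ (e div 2) \<or> RR = - (int p ^ (e div 2))"
    using sgn0 unfolding RR_def by auto
  ultimately have "(int p - 1) dvd int p ^ (e div 2)"
    by (elim disjE) simp_all
  moreover have "coprime (int p - 1) (int p ^ (e div 2))" by simp
  ultimately have "is_unit (int p - 1)" using coprime_absorb_left by blast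
  thus False using p3 by simp
qed

lemma beta_ord: "0 < k \<Longrightarrow> \<beta> ^ k = 1 \<Longrightarrow> p ^ e - 1 \<le> k"
proof -
  assume k: "0 < k" "\<beta> ^ k = 1"
  have "UNIV - {0::'a} \<subseteq> (\<lambda>j. \<beta> ^ j) ` {..<k}"
  proof
    fix x :: 'a assume "x \<in> UNIV - {0}"
    then obtain n where n: "x = \<beta> ^ n" using gen by blast
    have nn: "n = k * (n div k) + n mod k" by simp
    have "\<beta> ^ n = \<beta> ^ (k * (n div k) + n mod k)" by (subst nn) (rule refl)
    also have "\<dots> = (\<beta> ^ k) ^ (n div k) * \<beta> ^ (n mod k)" by (simp only: power_add power_mult)
    finally have "\<beta> ^ n = (\<beta> ^ k) ^ (n div k) * \<beta> ^ (n mod k)" .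
    hence "x = \<beta> ^ (n mod k)" using n k by simp
    thus "x \<in> (\<lambda>j. \<beta> ^ j) ` {..<k}" using k by auto
  qed
  hence "card (UNIV - {0::'a}) \<le> card ((\<lambda>j. \<beta> ^ j) ` {..<k})" by (intro card_mono) auto
  also have "\<dots> \<le> k" using card_image_le[of "{..<k}" "\<lambda>j. \<beta> ^ j"] by simp
  finally show ?thesis using card by simp
qed

lemma beta_frob_inj: "inj_on (\<lambda>i. \<beta> ^ (p ^ i)) {..<e}"
proof (rule inj_onI, rule ccontr)
  fix i j assume ij: "i \<in> {..<e}" "j \<in> {..<e}" "\<beta> ^ (p ^ i) = \<beta> ^ (p ^ j)" "i \<noteq> j"
  have mono: "p ^ a < p ^ b" if "a < b" for a b using that p3 by (intro power_strict_increasing) auto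
  have key: False if "a < b" "b < e" "\<beta> ^ (p ^ a) = \<beta> ^ (p ^ b)" for a b
  proof -
    have lt: "p ^ a < p ^ b" using mono that by blast
    have "\<beta> ^ (p ^ b) = \<beta> ^ (p ^ a) * \<beta> ^ (p ^ b - p ^ a)"
      using lt by (simp flip: power_add)
    hence "\<beta> ^ (p ^ b - p ^ a) = 1" using that(3) b0 by simp
    hence "p ^ e - 1 \<le> p ^ b - p ^ a" using lt by (intro beta_ord) auto
    moreover have "p ^ b \<le> p ^ (e - 1)" using that p3 by (intro power_increasing) auto
    moreover have "p ^ (e - 1) < p ^ e" using p3 e2 by (intro power_strict_increasing) auto
    moreover have "p ^ a \<ge> 1" using p3 by simp
    ultimately show False using lt by linarith
  qed
  show False
  proof (cases "i < j")
    case True thus False using key[of i j] ij by auto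
  next
    case False hence "j < i" using ij by auto
    thus False using key[of j i] ij by auto
  qed
qed

lemma beta_indep:
  assumes c: "\<forall>j<e. c j \<in> Fp" and s: "(\<Sum>j<e. c j * \<beta> ^ j) = 0"
  shows "\<forall>j<e. c j = 0"
proof -
  define P where "P = (\<Sum>j<e. monom (c j) j)"
  have cP: "coeff P k = (if k < e then c k else 0)" for k by (simp add: P_def coeff_sum coeff_monom)
  have root: "poly P (\<beta> ^ (p ^ i)) = 0" for i
  proof -
    have "poly P (\<beta> ^ (p ^ i)) = (\<Sum>j<e. c j * (\<beta> ^ (p ^ i)) ^ j)"
      by (simp add: P_def poly_sum poly_monom)
    also have "\<dots> = (\<Sum>j<e. (c j * \<beta> ^ j) ^ (p ^ i))"
      by (intro sum.cong refl) (simp add: power_mult_distrib Fp_pow_pi c power_mult[symmetric] mult.commute)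
    also have "\<dots> = (\<Sum>j<e. c j * \<beta> ^ j) ^ (p ^ i)" by (simp add: frob_sum)
    also have "\<dots> = 0" using s p3 by simp
    finally show ?thesis .
  qed
  have "P = 0"
  proof (rule ccontr)
    assume P0: "P \<noteq> 0"
    have dP: "degree P \<le> e - 1" by (rule degree_le) (auto simp: cP)
    have "(\<lambda>i. \<beta> ^ (p ^ i)) ` {..<e} \<subseteq> {x. poly P x = 0}" using root by auto
    hence "card ((\<lambda>i. \<beta> ^ (p ^ i)) ` {..<e}) \<le> card {x. poly P x = 0}" by (intro card_mono) auto
    moreover have "card ((\<lambda>i. \<beta> ^ (p ^ i)) ` {..<e}) = e" using beta_frob_inj by (simp add: card_image)
    ultimately have "e \<le> degree P" using card_poly_roots_bound[OF P0] by linarith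
    thus False using dP e2 by linarith
  qed
  show ?thesis
  proof (intro allI impI)
    fix j assume "j < e" thus "c j = 0" using cP[of j] \<open>P = 0\<close> by simp
  qed
qed

lemma beta_span: "\<exists>c. (\<forall>j<e. c j \<in> Fp) \<and> y = (\<Sum>j<e. c j * \<beta> ^ j)"
proof -
  define V where "V = (PiE {..<e} (\<lambda>_. Fp) :: (nat \<Rightarrow> 'a) set)"
  define phi where "phi c = (\<Sum>j<e. c j * \<beta> ^ j)" for c
  have inj: "inj_on phi V"
  proof (rule inj_onI)
    fix c c' assume cc: "c \<in> V" "c' \<in> V" "phi c = phi c'"
    have s0: "(\<Sum>j<e. (c j - c' j) * \<beta> ^ j) = 0"
      using cc(3) by (simp add: phi_def left_diff_distrib sum_subtractf)
    have cF: "\<forall>j<e. c j - c' j \<in> Fp"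
    proof (intro allI impI)
      fix j assume j: "j < e"
      have "c j \<in> Fp" using PiE_mem[of c "{..<e}" "\<lambda>_. Fp" j] cc(1) j unfolding V_def by simp
      moreover have "c' j \<in> Fp" using PiE_mem[of c' "{..<e}" "\<lambda>_. Fp" j] cc(2) j unfolding V_def by simp
      ultimately show "c j - c' j \<in> Fp" by (rule Fp_diff)
    qed
    have z: "\<forall>j<e. c j - c' j = 0" by (rule beta_indep[of "\<lambda>j. c j - c' j", OF cF s0])
    show "c = c'"
    proof (rule PiE_ext[of c "{..<e}" "\<lambda>_. Fp"])
      show "c \<in> PiE {..<e} (\<lambda>_. Fp)" "c' \<in> PiE {..<e} (\<lambda>_. Fp)" using cc(1,2) by (simp_all add: V_def)
      fix i assume "i \<in> {..<e}" thus "c i = c' i" using z by simp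
    qed
  qed
  have "card V = p ^ e" by (simp add: V_def card_PiE card_Fp)
  hence "card (phi ` V) = card (UNIV :: 'a set)" using inj card by (simp add: card_image)
  hence "phi ` V = UNIV" by (rule card_eq_UNIV_imp_eq_UNIV[OF finite])
  hence "y \<in> phi ` V" by simp
  then obtain c where "c \<in> V" "y = phi c" by blast
  hence "\<forall>j<e. c j \<in> Fp" "y = (\<Sum>j<e. c j * \<beta> ^ j)" by (auto simp: V_def phi_def PiE_iff)
  thus ?thesis by blast
qed

lemma tr_nondeg: "x \<noteq> 0 \<Longrightarrow> \<exists>j<e. tr p e (\<beta> ^ j * x) \<noteq> 0"
proof (rule ccontr)
  assume x: "x \<noteq> 0" and "\<not> (\<exists>j<e. tr p e (\<beta> ^ j * x) \<noteq> 0)"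
  hence z: "\<forall>j<e. tr p e (\<beta> ^ j * x) = 0" by blast
  have "tr p e (y * x) = 0" for y
  proof -
    obtain c where c: "\<forall>j<e. c j \<in> Fp" "y = (\<Sum>j<e. c j * \<beta> ^ j)" using beta_span by blast
    have "tr p e (y * x) = tr p e (\<Sum>j<e. c j * (\<beta> ^ j * x))"
      by (simp add: c(2) sum_distrib_right mult.assoc)
    also have "\<dots> = (\<Sum>j<e. c j * tr p e (\<beta> ^ j * x))" using c(1) by (intro tr_sum) auto
    also have "\<dots> = 0" using z by simp
    finally show ?thesis .
  qed
  moreover obtain z :: 'a where z: "tr p e z \<noteq> 0" using tr_nonzero by blast
  moreover have "z = (z / x) * x" using x by simp
  ultimately have "tr p e z = 0" by (metis (no_types))
  thus False using z by simp
qed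

end

context S begin

abbreviation "q \<equiv> p ^ e"
abbreviation "m \<equiv> e + 2"
abbreviation "n \<equiv> p ^ e + e + 2"
abbreviation "G \<equiv> G2' p e f \<beta> d"

definition cw :: "(nat \<Rightarrow> 'a) \<Rightarrow> nat \<Rightarrow> 'a" where
  "cw a = (\<lambda>j. if j < n then (\<Sum>r<m. a r * G r j) else 0)"

definition bv :: "(nat \<Rightarrow> 'a) \<Rightarrow> 'a" where
  "bv a = (\<Sum>r<e. a (r + 2) * \<beta> ^ r)"

definition val :: "(nat \<Rightarrow> 'a) \<Rightarrow> 'a \<Rightarrow> 'a" where
  "val a x = a 0 + a 1 * (f x + 1) + tr p e (bv a * x)"

lemma row_code_eq: "row_code m n G = {cw a | a. \<forall>r<m. a r \<in> Fp}"
  unfolding row_code_def cw_def by simp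

lemma G_low: "j < m \<Longrightarrow> G r j = (if r = j then 1 else 0)"
  unfolding G2'_def by simp

lemma G_high: "i < q \<Longrightarrow> G r (m + i) =
   (if r = 0 then 1 else if r = 1 then f (d i) + 1 else tr p e (\<beta> ^ (r - 2) * d i))"
  unfolding G2'_def Let_def by simp

lemma G_Fp: "G r j \<in> Fp"
  unfolding G2'_def Let_def by (simp add: tr_in_Fp)

lemma cw_low: "j < m \<Longrightarrow> cw a j = a j"
proof -
  assume j: "j < m"
  have "cw a j = (\<Sum>r<m. a r * (if r = j then 1 else 0))"
    using j by (simp add: cw_def G_low)
  also have "\<dots> = a j" using j by (simp add: if_distrib cong: if_cong)
  finally show ?thesis .
qed

lemma cw_out: "j \<ge> n \<Longrightarrow> cw a j = 0"
  by (simp add: cw_def)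

lemma cw_Fp: "\<forall>r<m. a r \<in> Fp \<Longrightarrow> cw a j \<in> Fp"
proof -
  assume a: "\<forall>r<m. a r \<in> Fp"
  have "(\<Sum>r<m. a r * G r j) \<in> Fp"
  proof (rule Fp_sum)
    fix r assume "r \<in> {..<m}"
    thus "a r * G r j \<in> Fp" using a G_Fp by simp
  qed
  thus ?thesis by (simp add: cw_def)
qed

lemma sum_m: "(\<Sum>r<m. g r) = g 0 + g 1 + (\<Sum>r<e. g (r + 2))" for g :: "nat \<Rightarrow> 'a"
proof -
  have "(\<Sum>r<Suc (Suc e). g r) = g 0 + (\<Sum>r<Suc e. g (Suc r))" by (rule sum.lessThan_Suc_shift)
  also have "(\<Sum>r<Suc e. g (Suc r)) = g 1 + (\<Sum>r<e. g (Suc (Suc r)))"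
    by (subst sum.lessThan_Suc_shift) simp
  finally show ?thesis by (simp add: add.assoc)
qed

lemma cw_high:
  assumes a: "\<forall>r<m. a r \<in> Fp" and i: "i < q"
  shows "cw a (m + i) = val a (d i)"
proof -
  have "cw a (m + i) = (\<Sum>r<m. a r * G r (m + i))" using i by (simp add: cw_def)
  also have "\<dots> = a 0 * G 0 (m + i) + a 1 * G 1 (m + i) + (\<Sum>r<e. a (r + 2) * G (r + 2) (m + i))"
    by (rule sum_m)
  also have "(\<Sum>r<e. a (r + 2) * G (r + 2) (m + i)) = (\<Sum>r<e. a (r + 2) * tr p e (\<beta> ^ r * d i))"
  proof (intro sum.cong refl)
    fix r assume "r \<in> {..<e}"
    show "a (r + 2) * G (r + 2) (m + i) = a (r + 2) * tr p e (\<beta> ^ r * d i)"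
      by (subst G_high[OF i]) simp
  qed
  also have "\<dots> = tr p e (\<Sum>r<e. a (r + 2) * (\<beta> ^ r * d i))"
    using a by (intro tr_sum[symmetric]) auto
  also have "(\<Sum>r<e. a (r + 2) * (\<beta> ^ r * d i)) = bv a * d i"
    by (simp add: bv_def sum_distrib_right mult.assoc)
  finally show ?thesis using G_high[OF i, of 0] G_high[OF i, of 1] by (simp add: val_def)
qed

lemma d_inj: "inj_on d {..<q}" using dbij by (simp add: bij_betw_def atLeast0LessThan)
lemma d_img: "d ` {..<q} = UNIV" using dbij by (simp add: bij_betw_def atLeast0LessThan)

lemma card_d: "card {i. i < q \<and> P (d i)} = card {x. P x}"
proof -
  have "d ` {i. i < q \<and> P (d i)} = {x. P x}"
  proof
    show "d ` {i. i < q \<and> P (d i)} \<subseteq> {x. P x}" by auto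
    show "{x. P x} \<subseteq> d ` {i. i < q \<and> P (d i)}"
    proof
      fix x assume "x \<in> {x. P x}"
      moreover obtain i where "i < q" "x = d i" using d_img by (metis UNIV_I imageE lessThan_iff)
      ultimately show "x \<in> d ` {i. i < q \<and> P (d i)}" by auto
    qed
  qed
  moreover have "inj_on d {i. i < q \<and> P (d i)}" using d_inj by (rule inj_on_subset) auto
  ultimately show ?thesis using card_image by fastforce
qed

definition wt :: "(nat \<Rightarrow> 'a) \<Rightarrow> nat" where "wt a = card {r. r < m \<and> a r \<noteq> 0}"

lemma weight:
  assumes a: "\<forall>r<m. a r \<in> Fp"
  shows "hweight n (cw a) = wt a + card {x. val a x \<noteq> 0}"
proof -
  have eq: "{j. j < n \<and> cw a j \<noteq> 0} = {r. r < m \<and> a r \<noteq> 0} \<union> (\<lambda>i. m + i) ` {i. i < q \<and> val a (d i) \<noteq> 0}"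
  proof -
    have "j \<in> {j. j < n \<and> cw a j \<noteq> 0} \<longleftrightarrow> j \<in> {r. r < m \<and> a r \<noteq> 0} \<union> (\<lambda>i. m + i) ` {i. i < q \<and> val a (d i) \<noteq> 0}" for j
    proof (cases "j < m")
      case True thus ?thesis by (auto simp: cw_low)
    next
      case False
      then obtain i where i: "j = m + i" by (metis le_Suc_ex not_less)
      show ?thesis
      proof (cases "i < q")
        case True thus ?thesis using i cw_high[OF a True] by auto
      next
        case False thus ?thesis using i by auto
      qed
    qed
    thus ?thesis by blast
  qed
  have "hweight n (cw a) = card ({r. r < m \<and> a r \<noteq> 0} \<union> (\<lambda>i. m + i) ` {i. i < q \<and> val a (d i) \<noteq> 0})"
    unfolding hweight_def eq ..
  also have "\<dots> = card {r. r < m \<and> a r \<noteq> 0} + card ((\<lambda>i. m + i) ` {i. i < q \<and> val a (d i) \<noteq> 0})"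
    by (rule card_Un_disjoint) auto
  also have "card ((\<lambda>i. m + i) ` {i. i < q \<and> val a (d i) \<noteq> 0}) = card {i. i < q \<and> val a (d i) \<noteq> 0}"
    by (rule card_image) (auto simp: inj_on_def)
  also have "\<dots> = card {x. val a x \<noteq> 0}" by (rule card_d)
  finally show ?thesis by (simp add: wt_def)
qed

lemma card_nonzero: "card {x::'a. P x \<noteq> 0} = q - card {x. P x = 0}"
proof -
  have "{x::'a. P x \<noteq> 0} = UNIV - {x. P x = 0}" by auto
  thus ?thesis using card by (simp add: card_Diff_subset)
qed

end

context S begin

definition "w = p ^ (e div 2 - 1)"

lemma w_pos: "w \<ge> 1" using p3 by (simp add: w_def)

lemma pk: "p ^ (e div 2) = p * w"
proof -
  have "e div 2 = Suc (e div 2 - 1)" using e2 by simp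
  hence "p ^ (e div 2) = p ^ Suc (e div 2 - 1)" by simp
  thus ?thesis by (simp add: w_def)
qed

lemma pe1: "p ^ (e - 1) = p ^ (e div 2) * w"
proof -
  have "e - 1 = e div 2 + (e div 2 - 1)" using e2 eve by auto
  thus ?thesis by (simp add: w_def power_add)
qed

lemma pe: "p ^ e = p * p ^ (e - 1)"
proof -
  have "e = Suc (e - 1)" using e2 by simp
  hence "p ^ e = p ^ Suc (e - 1)" by simp
  thus ?thesis by simp
qed

lemma RR_eq: "RR = sgn0 * int p * int w"
  unfolding RR_def using pk by (simp add: mult.assoc flip: of_nat_power of_nat_mult)

lemma C0_val: "C0 = int (p ^ (e - 1)) - sgn0 * int w"
proof -
  have "int p * C0 = int (p ^ e) - RR" using C0_eq by simp
  also have "\<dots> = int p * (int (p ^ (e - 1)) - sgn0 * int w)"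
    unfolding RR_eq pe by (simp add: algebra_simps)
  finally show ?thesis using p3 by simp
qed

lemma zeros_A1:
  assumes a: "\<forall>r<m. a r \<in> Fp" and A1: "a 1 \<noteq> 0"
  shows "int (card {x. val a x = 0}) = C0 + (if - (a 0 + a 1) / a 1 = fstar (- bv a / a 1) then RR else 0)"
proof -
  define b' where "b' = - bv a / a 1"
  define jj where "jj = - (a 0 + a 1) / a 1"
  have a01: "a 0 \<in> Fp" "a 1 \<in> Fp" using a by auto
  have jF: "jj \<in> Fp" using a01 by (simp add: jj_def)
  have ia: "- inverse (a 1) \<in> Fp" using a01 by simp
  have "val a x = a 1 * (f x - tr p e (b' * x) - jj)" for x
  proof -
    have "b' * x = (- inverse (a 1)) * (bv a * x)" by (simp add: b'_def divide_inverse)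
    hence "tr p e (b' * x) = - inverse (a 1) * tr p e (bv a * x)" using tr_smult[OF ia] by simp
    thus ?thesis using A1 by (simp add: val_def jj_def field_simps)
  qed
  hence "{x. val a x = 0} = {x. f x - tr p e (b' * x) = jj}" using A1 by auto
  thus ?thesis using counts[OF jF, of b'] by (simp add: b'_def jj_def)
qed

lemma zeros_A1_le:
  assumes a: "\<forall>r<m. a r \<in> Fp" and A1: "a 1 \<noteq> 0"
  shows "int (card {x. val a x = 0}) \<le> C0 + max RR 0"
  using zeros_A1[OF a A1] by auto

lemma zeros_bv:
  assumes A1: "a 1 = 0" and bv: "bv a \<noteq> 0"
  shows "card {x. val a x = 0} \<le> p ^ (e - 1)"
proof -
  have "{x. val a x = 0} = (\<lambda>y. y / bv a) ` {y. tr p e y + a 0 = 0}"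
  proof (rule subset_antisym; rule subsetI)
    fix x assume "x \<in> {x. val a x = 0}"
    hence "tr p e (bv a * x) + a 0 = 0" using A1 by (simp add: val_def add.commute)
    moreover have "x = (bv a * x) / bv a" using bv by simp
    ultimately show "x \<in> (\<lambda>y. y / bv a) ` {y. tr p e y + a 0 = 0}" by blast
  next
    fix x assume "x \<in> (\<lambda>y. y / bv a) ` {y. tr p e y + a 0 = 0}"
    then obtain y where "tr p e y + a 0 = 0" "x = y / bv a" by blast
    thus "x \<in> {x. val a x = 0}" using A1 bv by (simp add: val_def add.commute)
  qed
  hence "card {x. val a x = 0} \<le> card {y. tr p e y + a 0 = 0}" by (simp add: card_image_le)
  thus ?thesis using tr_zeros[of "a 0"] by linarith
qed

lemma wt_ge1: "r < m \<Longrightarrow> a r \<noteq> 0 \<Longrightarrow> wt a \<ge> 1"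
proof -
  assume "r < m" "a r \<noteq> 0"
  hence "{r. r < m \<and> a r \<noteq> 0} \<noteq> {}" by blast
  moreover have "finite {r. r < m \<and> a r \<noteq> 0}" by simp
  ultimately have "card {r. r < m \<and> a r \<noteq> 0} > 0" by (simp add: card_gt_0_iff)
  thus ?thesis unfolding wt_def by simp
qed

lemma wt_ge2: "r < m \<Longrightarrow> r \<noteq> 1 \<Longrightarrow> a r \<noteq> 0 \<Longrightarrow> a 1 \<noteq> 0 \<Longrightarrow> wt a \<ge> 2"
proof -
  assume r: "r < m" "r \<noteq> 1" "a r \<noteq> 0" "a 1 \<noteq> 0"
  have "{1, r} \<subseteq> {r. r < m \<and> a r \<noteq> 0}" using r by auto
  hence "card {1, r} \<le> wt a" unfolding wt_def by (intro card_mono) auto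
  thus ?thesis using r by simp
qed

lemma bv0: "\<forall>r<m. a r \<in> Fp \<Longrightarrow> bv a = 0 \<Longrightarrow> \<forall>r<e. a (r + 2) = 0"
  using beta_indep[of "\<lambda>r. a (r + 2)"] by (simp add: bv_def)

lemma bv_zero: "\<forall>r<e. a (r + 2) = 0 \<Longrightarrow> bv a = 0"
  by (simp add: bv_def)

lemma weight_int:
  assumes a: "\<forall>r<m. a r \<in> Fp"
  shows "int (hweight n (cw a)) = int (wt a) + int q - int (card {x. val a x = 0})"
proof -
  have "card {x. val a x = 0} \<le> q" using card card_mono[of UNIV "{x. val a x = 0}"] by simp
  thus ?thesis using weight[OF a] card_nonzero[of "val a"] by simp
qed

end

context S begin

lemma cw_restrict: "cw (restrict a {..<m}) = cw a"
  unfolding cw_def by (intro ext) (simp add: restrict_def)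

lemma cw_zero: "\<forall>r<m. a r = 0 \<Longrightarrow> cw a = (\<lambda>_. 0)"
  unfolding cw_def by (intro ext) simp

lemma code_params_gen:
  assumes lb: "\<And>a r0. \<forall>r<m. a r \<in> Fp \<Longrightarrow> r0 < m \<Longrightarrow> a r0 \<noteq> 0 \<Longrightarrow> D \<le> hweight n (cw a)"
    and ach: "\<exists>a r0. (\<forall>r<m. a r \<in> Fp) \<and> r0 < m \<and> a r0 \<noteq> 0 \<and> hweight n (cw a) = D"
  shows "code_params p (row_code m n G) n m D"
proof -
  define V where "V = (PiE {..<m} (\<lambda>_. Fp) :: (nat \<Rightarrow> 'a) set)"
  have C: "row_code m n G = cw ` V"
  proof (rule subset_antisym; rule subsetI)
    fix c assume "c \<in> row_code m n G"
    then obtain a where a: "\<forall>r<m. a r \<in> Fp" "c = cw a" unfolding row_code_eq by blast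
    have "restrict a {..<m} \<in> V" using a(1) by (auto simp: V_def)
    moreover have "c = cw (restrict a {..<m})" using a(2) cw_restrict by simp
    ultimately show "c \<in> cw ` V" by blast
  next
    fix c assume "c \<in> cw ` V"
    then obtain a where a: "a \<in> V" "c = cw a" by blast
    have "\<forall>r<m. a r \<in> Fp" using a(1) by (auto simp: V_def PiE_iff)
    thus "c \<in> row_code m n G" unfolding row_code_eq using a(2) by blast
  qed
  have inj: "inj_on cw V"
  proof (rule inj_onI)
    fix a a' assume aa: "a \<in> V" "a' \<in> V" "cw a = cw a'"
    show "a = a'"
    proof (rule PiE_ext[of a "{..<m}" "\<lambda>_. Fp"])
      show "a \<in> PiE {..<m} (\<lambda>_. Fp)" "a' \<in> PiE {..<m} (\<lambda>_. Fp)" using aa(1,2) by (simp_all add: V_def)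
      fix i assume "i \<in> {..<m}"
      hence "cw a i = a i" "cw a' i = a' i" using cw_low by simp_all
      thus "a i = a' i" using aa(3) by simp
    qed
  qed
  have fV: "finite V" unfolding V_def by (intro finite_PiE) auto
  have cardV: "card V = p ^ m" by (simp add: V_def card_PiE card_Fp)
  have part1: "\<forall>c\<in>row_code m n G. (\<forall>j<n. c j \<in> Fp) \<and> (\<forall>j\<ge>n. c j = 0)"
  proof
    fix c assume "c \<in> row_code m n G"
    then obtain a where a: "\<forall>r<m. a r \<in> Fp" "c = cw a" unfolding row_code_eq by blast
    thus "(\<forall>j<n. c j \<in> Fp) \<and> (\<forall>j\<ge>n. c j = 0)" using cw_Fp cw_out by simp
  qed
  have part2: "card (row_code m n G) = p ^ m" using C inj cardV by (simp add: card_image)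
  have part3: "D = Min (hweight n ` (row_code m n G - {\<lambda>_. 0}))"
  proof (rule Min_eqI[symmetric])
    show "finite (hweight n ` (row_code m n G - {\<lambda>_. 0}))" using C fV by simp
  next
    fix y assume "y \<in> hweight n ` (row_code m n G - {\<lambda>_. 0})"
    then obtain c where c: "c \<in> row_code m n G" "c \<noteq> (\<lambda>_. 0)" "y = hweight n c" by blast
    then obtain a where a: "\<forall>r<m. a r \<in> Fp" "c = cw a" unfolding row_code_eq by blast
    have "\<exists>r0<m. a r0 \<noteq> 0"
    proof (rule ccontr)
      assume "\<not> (\<exists>r0<m. a r0 \<noteq> 0)"
      hence "cw a = (\<lambda>_. 0)" using cw_zero by simp
      thus False using a c by simp
    qed
    then obtain r0 where "r0 < m" "a r0 \<noteq> 0" by blast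
    thus "D \<le> y" using lb[OF a(1)] a c by simp
  next
    obtain a r0 where a: "\<forall>r<m. a r \<in> Fp" "r0 < m" "a r0 \<noteq> 0" "hweight n (cw a) = D" using ach by blast
    have "cw a \<in> row_code m n G" unfolding row_code_eq using a(1) by blast
    moreover have "cw a \<noteq> (\<lambda>_. 0)"
    proof
      assume "cw a = (\<lambda>_. 0)"
      hence "cw a r0 = 0" by simp
      thus False using cw_low[OF a(2)] a(3) by simp
    qed
    ultimately show "D \<in> hweight n ` (row_code m n G - {\<lambda>_. 0})" using a(4) by force
  qed
  show ?thesis unfolding code_params_def using part1 part2 part3 by blast
qed

lemma lb_general:
  assumes a: "\<forall>r<m. a r \<in> Fp" and r0: "r0 < m" "a r0 \<noteq> 0"
  shows "int (hweight n (cw a)) \<ge> 2 + int q - (C0 + max RR 0) \<or>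
         int (hweight n (cw a)) \<ge> 1 + int q - C0 \<or>
         int (hweight n (cw a)) \<ge> 1 + int q - int (p ^ (e - 1))"
proof -
  have W: "int (hweight n (cw a)) = int (wt a) + int q - int (card {x. val a x = 0})"
    by (rule weight_int[OF a])
  have w1: "wt a \<ge> 1" by (rule wt_ge1[of r0 a, OF r0])
  show ?thesis
  proof (cases "a 1 = 0")
    case False
    show ?thesis
    proof (cases "\<exists>r<m. r \<noteq> 1 \<and> a r \<noteq> 0")
      case True
      then obtain r where "r < m" "r \<noteq> 1" "a r \<noteq> 0" by blast
      hence "wt a \<ge> 2" using wt_ge2 False by blast
      moreover have "int (card {x. val a x = 0}) \<le> C0 + max RR 0" by (rule zeros_A1_le[OF a False])
      ultimately show ?thesis using W by linarith
    next
      case nt: False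
      hence a0: "a 0 = 0" by auto
      have "\<forall>r<e. a (r + 2) = 0"
      proof (intro allI impI)
        fix r assume "r < e"
        hence "r + 2 < m" "r + 2 \<noteq> 1" by auto
        thus "a (r + 2) = 0" using nt by blast
      qed
      hence bz: "bv a = 0" by (rule bv_zero)
      have jj: "- (a 0 + a 1) / a 1 = -1" using a0 False by simp
      have fz: "fstar (- bv a / a 1) = 0" using bz fstar0 by simp
      have "int (card {x. val a x = 0}) = C0 + (if (-1::'a) = 0 then RR else 0)"
        using zeros_A1[OF a False] unfolding jj fz .
      hence "int (card {x. val a x = 0}) = C0" by simp
      thus ?thesis using W w1 by linarith
    qed
  next
    case True
    show ?thesis
    proof (cases "bv a = 0")
      case False
      hence "card {x. val a x = 0} \<le> p ^ (e - 1)" using zeros_bv True by blast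
      thus ?thesis using W w1 by linarith
    next
      case bz: True
      have z2: "\<forall>r<e. a (r + 2) = 0" using bv0[OF a bz] .
      have "a 0 \<noteq> 0"
      proof (rule ccontr)
        assume "\<not> a 0 \<noteq> 0"
        hence "a r = 0" if "r < m" for r
        proof (cases r)
          case (Suc r')
          show ?thesis
          proof (cases r')
            case (Suc r'')
            hence "r'' < e" using that \<open>r = Suc r'\<close> by simp
            thus ?thesis using z2 by (simp add: \<open>r = Suc r'\<close> Suc)
          qed (use True Suc in simp)
        qed (use \<open>\<not> a 0 \<noteq> 0\<close> in simp)
        thus False using r0 by blast
      qed
      hence "{x. val a x = 0} = {}" using True bz by (simp add: val_def)
      hence "card {x. val a x = 0} = 0" by simp
      thus ?thesis using W w1 by linarith
    qed
  qed
qed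

definition "D1 = p ^ e - p ^ (e - 1) - (p - 1) * p ^ (e div 2 - 1) + 2"
definition "D2 = p ^ e - p ^ (e - 1) - p ^ (e div 2 - 1) + 1"

lemma arith_facts:
  "int q = int p * int (p ^ (e - 1))" "int (p ^ (e - 1)) \<ge> int w" "int w \<ge> 1" "int p \<ge> 3"
proof -
  show "int q = int p * int (p ^ (e - 1))" using pe by (metis of_nat_mult)
  have "p ^ (e - 1) = p ^ (e div 2) * w" by (rule pe1)
  moreover have "p ^ (e div 2) \<ge> 1" using p3 by simp
  ultimately have "p ^ (e - 1) \<ge> w" by simp
  thus "int (p ^ (e - 1)) \<ge> int w" by simp
  show "int w \<ge> 1" using w_pos by simp
  show "int p \<ge> 3" using p3 by simp
qed

lemma D1_int: "int D1 = int q - int (p ^ (e - 1)) - (int p - 1) * int w + 2"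
proof -
  have "(p - 1) * w \<le> (p - 1) * p ^ (e - 1)" using arith_facts(2) by (intro mult_left_mono) auto
  moreover have "q = p * p ^ (e - 1)" using pe by simp
  moreover have "p * p ^ (e - 1) = (p - 1) * p ^ (e - 1) + p ^ (e - 1)" using p3
    by (cases p) auto
  ultimately have le: "p ^ (e - 1) + (p - 1) * w \<le> q" by linarith
  have "int D1 = int (q - p ^ (e - 1) - (p - 1) * w + 2)" by (simp add: D1_def w_def)
  also have "\<dots> = int q - int (p ^ (e - 1)) - int ((p - 1) * w) + 2" using le by (simp add: of_nat_diff)
  also have "int ((p - 1) * w) = (int p - 1) * int w" using p3 by (simp add: of_nat_diff)
  finally show ?thesis .
qed

lemma D2_int: "int D2 = int q - int (p ^ (e - 1)) - int w + 1"
proof -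
  have "1 * p ^ (e - 1) \<le> (p - 1) * p ^ (e - 1)" by (rule mult_right_mono) (use p3 in auto)
  hence "w \<le> (p - 1) * p ^ (e - 1)" using arith_facts(2) by linarith
  moreover have "q = p * p ^ (e - 1)" using pe by simp
  moreover have "p * p ^ (e - 1) = (p - 1) * p ^ (e - 1) + p ^ (e - 1)" using p3
    by (cases p) auto
  ultimately have le: "p ^ (e - 1) + w \<le> q" by linarith
  have "int D2 = int (q - p ^ (e - 1) - w + 1)" by (simp add: D2_def w_def)
  also have "\<dots> = int q - int (p ^ (e - 1)) - int w + 1" using le by (simp add: of_nat_diff)
  finally show ?thesis .
qed

end

context S begin

lemma pw_facts: "(int p - 1) * int w = int p * int w - int w" "int p * int w \<ge> 3 * int w"
proof -
  show "(int p - 1) * int w = int p * int w - int w" by (simp add: algebra_simps)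
  show "int p * int w \<ge> 3 * int w" using arith_facts(4) by (intro mult_right_mono) auto
qed

lemma code1:
  assumes s: "sgn0 = 1"
  shows "code_params p (row_code m n G) n m D1"
proof (rule code_params_gen)
  have RRv: "RR = int p * int w" using RR_eq s by simp
  have C0v: "C0 = int (p ^ (e - 1)) - int w" using C0_val s by simp
  have mx: "max RR 0 = RR" using RRv arith_facts pw_facts by simp
  fix a :: "nat \<Rightarrow> 'a" and r0 assume a: "\<forall>r<m. a r \<in> Fp" and r0: "r0 < m" "a r0 \<noteq> 0"
  have "int D1 \<le> int (hweight n (cw a))"
    using lb_general[OF a r0] D1_int RRv C0v mx arith_facts pw_facts by linarith
  thus "D1 \<le> hweight n (cw a)" by simp
next
  have RRv: "RR = int p * int w" using RR_eq s by simp
  have C0v: "C0 = int (p ^ (e - 1)) - int w" using C0_val s by simp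
  define a :: "nat \<Rightarrow> 'a" where "a r = (if r = 0 then -1 else if r = 1 then 1 else 0)" for r
  have aF: "\<forall>r<m. a r \<in> Fp" by (simp add: a_def)
  have a1: "a 1 \<noteq> 0" by (simp add: a_def)
  have "{r. r < m \<and> a r \<noteq> 0} = {0, 1}" by (auto simp: a_def)
  hence wt2: "wt a = 2" by (simp add: wt_def)
  have bz: "bv a = 0" by (simp add: bv_def a_def)
  have jj: "- (a 0 + a 1) / a 1 = 0" by (simp add: a_def)
  have fz: "fstar (- bv a / a 1) = 0" using bz fstar0 by simp
  have "int (card {x. val a x = 0}) = C0 + (if (0::'a) = 0 then RR else 0)"
    using zeros_A1[OF aF a1] unfolding jj fz .
  hence "int (card {x. val a x = 0}) = C0 + RR" by simp
  hence "int (hweight n (cw a)) = int D1"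
    using weight_int[OF aF] wt2 D1_int RRv C0v pw_facts by linarith
  hence "hweight n (cw a) = D1" by simp
  thus "\<exists>a r0. (\<forall>r<m. a r \<in> Fp) \<and> r0 < m \<and> a r0 \<noteq> 0 \<and> hweight n (cw a) = D1"
    using aF a1 by (intro exI[of _ a] exI[of _ 1]) simp
qed

lemma code2:
  assumes s: "sgn0 = -1"
  shows "code_params p (row_code m n G) n m D2"
proof (rule code_params_gen)
  have RRv: "RR = - (int p * int w)" using RR_eq s by simp
  have C0v: "C0 = int (p ^ (e - 1)) + int w" using C0_val s by simp
  have mx: "max RR 0 = 0" using RRv arith_facts pw_facts by simp
  fix a :: "nat \<Rightarrow> 'a" and r0 assume a: "\<forall>r<m. a r \<in> Fp" and r0: "r0 < m" "a r0 \<noteq> 0"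
  have "int D2 \<le> int (hweight n (cw a))"
    using lb_general[OF a r0] D2_int RRv C0v mx arith_facts pw_facts by linarith
  thus "D2 \<le> hweight n (cw a)" by simp
next
  have C0v: "C0 = int (p ^ (e - 1)) + int w" using C0_val s by simp
  define a :: "nat \<Rightarrow> 'a" where "a r = (if r = 1 then 1 else 0)" for r
  have aF: "\<forall>r<m. a r \<in> Fp" by (simp add: a_def)
  have a1: "a 1 \<noteq> 0" by (simp add: a_def)
  have "{r. r < m \<and> a r \<noteq> 0} = {1}" by (auto simp: a_def)
  hence wt1: "wt a = 1" by (simp add: wt_def)
  have bz: "bv a = 0" by (simp add: bv_def a_def)
  have jj: "- (a 0 + a 1) / a 1 = -1" by (simp add: a_def)
  have fz: "fstar (- bv a / a 1) = 0" using bz fstar0 by simp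
  have "int (card {x. val a x = 0}) = C0 + (if (-1::'a) = 0 then RR else 0)"
    using zeros_A1[OF aF a1] unfolding jj fz .
  hence "int (card {x. val a x = 0}) = C0" by simp
  hence "int (hweight n (cw a)) = int D2"
    using weight_int[OF aF] wt1 D2_int C0v by linarith
  hence "hweight n (cw a) = D2" by simp
  thus "\<exists>a r0. (\<forall>r<m. a r \<in> Fp) \<and> r0 < m \<and> a r0 \<noteq> 0 \<and> hweight n (cw a) = D2"
    using aF a1 by (intro exI[of _ a] exI[of _ 1]) simp
qed

end

context S begin

lemma sum_split_m: "(\<Sum>j<m + k. g j) = (\<Sum>j<m. g j) + (\<Sum>i<k. g (m + i))" for g :: "nat \<Rightarrow> 'a"
  by (induction k) (simp_all add: add.assoc)

definition rowsum :: "(nat \<Rightarrow> 'a) \<Rightarrow> nat \<Rightarrow> 'a" where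
  "rowsum v r = (\<Sum>j<n. v j * G r j)"

lemma rowsum_eq: "r < m \<Longrightarrow> rowsum v r = v r + (\<Sum>i<q. G r (m + i) * v (m + i))"
proof -
  assume r: "r < m"
  have nn: "n = m + q" by simp
  have "rowsum v r = (\<Sum>j<m. v j * G r j) + (\<Sum>i<q. v (m + i) * G r (m + i))"
    unfolding rowsum_def nn by (rule sum_split_m)
  also have "(\<Sum>j<m. v j * G r j) = (\<Sum>j<m. if j = r then v j else 0)"
    by (intro sum.cong refl) (simp add: G_low)
  also have "\<dots> = v r" using r by simp
  finally show ?thesis by (simp add: mult.commute)
qed

abbreviation "CC \<equiv> row_code m n G"

definition valid :: "(nat \<Rightarrow> 'a) \<Rightarrow> bool" where
  "valid v \<longleftrightarrow> (\<forall>j<n. v j \<in> Fp) \<and> (\<forall>j\<ge>n. v j = 0)"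

lemma dual_char: "v \<in> dual_code n CC \<longleftrightarrow> valid v \<and> (\<forall>r<m. rowsum v r = 0)"
proof
  assume v: "v \<in> dual_code n CC"
  hence val: "valid v" and orth: "\<forall>c\<in>CC. (\<Sum>j<n. v j * c j) = 0"
    unfolding dual_code_def valid_def by auto
  have "rowsum v r = 0" if r: "r < m" for r
  proof -
    define a :: "nat \<Rightarrow> 'a" where "a r' = (if r' = r then 1 else 0)" for r'
    have aF: "\<forall>r'<m. a r' \<in> Fp" by (simp add: a_def)
    have "cw a \<in> CC" unfolding row_code_eq using aF by blast
    hence "(\<Sum>j<n. v j * cw a j) = 0" using orth by blast
    moreover have "cw a j = G r j" if jn: "j < n" for j
    proof -
      have "cw a j = (\<Sum>r'<m. a r' * G r' j)" using jn by (simp add: cw_def)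
      also have "\<dots> = (\<Sum>r'<m. if r' = r then G r' j else 0)" by (intro sum.cong refl) (simp add: a_def)
      also have "\<dots> = G r j" by (simp only: sum.delta finite_lessThan) (use r in simp)
      finally show ?thesis .
    qed
    ultimately show ?thesis unfolding rowsum_def by simp
  qed
  thus "valid v \<and> (\<forall>r<m. rowsum v r = 0)" using val by blast
next
  assume h: "valid v \<and> (\<forall>r<m. rowsum v r = 0)"
  have "(\<Sum>j<n. v j * c j) = 0" if c: "c \<in> CC" for c
  proof -
    obtain a where a: "\<forall>r<m. a r \<in> Fp" "c = cw a" using c unfolding row_code_eq by blast
    have "(\<Sum>j<n. v j * c j) = (\<Sum>j<n. \<Sum>r<m. a r * (v j * G r j))"
    proof (intro sum.cong refl)
      fix j assume "j \<in> {..<n}"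
      hence "c j = (\<Sum>r<m. a r * G r j)" using a(2) by (simp add: cw_def del: sum.lessThan_Suc)
      thus "v j * c j = (\<Sum>r<m. a r * (v j * G r j))" by (simp add: sum_distrib_left mult_ac del: sum.lessThan_Suc)
    qed
    also have "\<dots> = (\<Sum>r<m. a r * rowsum v r)"
      by (subst sum.swap) (simp add: rowsum_def sum_distrib_left del: sum.lessThan_Suc)
    also have "\<dots> = 0" using h by simp
    finally show ?thesis .
  qed
  thus "v \<in> dual_code n CC" using h unfolding dual_code_def valid_def by blast
qed

definition psi :: "(nat \<Rightarrow> 'a) \<Rightarrow> nat \<Rightarrow> 'a" where
  "psi u j = (if j < m then - (\<Sum>i<q. G j (m + i) * u i) else if j < n then u (j - m) else 0)"

lemma psi_high: "i < q \<Longrightarrow> psi u (m + i) = u i"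
  by (simp add: psi_def)

lemma dual_card: "card (dual_code n CC) = p ^ q" and dual_fin: "finite (dual_code n CC)"
proof -
  define V where "V = (PiE {..<q} (\<lambda>_. Fp) :: (nat \<Rightarrow> 'a) set)"
  have img: "dual_code n CC = psi ` V"
  proof (rule subset_antisym; rule subsetI)
    fix v assume "v \<in> dual_code n CC"
    hence h: "valid v" "\<forall>r<m. rowsum v r = 0" using dual_char by blast+
    define u where "u = restrict (\<lambda>i. v (m + i)) {..<q}"
    have "u \<in> V" using h(1) by (auto simp: V_def u_def valid_def)
    moreover have "psi u = v"
    proof
      fix j
      show "psi u j = v j"
      proof (cases "j < m")
        case True
        have "rowsum v j = 0" using h(2) True by blast
        hence "v j = - (\<Sum>i<q. G j (m + i) * v (m + i))"
          using rowsum_eq[OF True] by (simp add: eq_neg_iff_add_eq_0)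
        moreover have "(\<Sum>i<q. G j (m + i) * u i) = (\<Sum>i<q. G j (m + i) * v (m + i))"
          by (intro sum.cong refl) (simp add: u_def)
        ultimately show ?thesis using True by (simp add: psi_def)
      next
        case False
        show ?thesis
        proof (cases "j < n")
          case True
          have jj: "m + (j - m) = j" using False by simp
          have "psi u j = u (j - m)" using False True by (simp add: psi_def)
          also have "\<dots> = v (m + (j - m))"
          proof -
            have "j - m < q" using False True by simp
            thus ?thesis by (simp add: u_def)
          qed
          finally show ?thesis unfolding jj .
        next
          case nF: False
          thus ?thesis using h(1) False by (simp add: psi_def valid_def)
        qed
      qed
    qed
    ultimately show "v \<in> psi ` V" by blast
  next
    fix v assume "v \<in> psi ` V"
    then obtain u where u: "u \<in> V" "v = psi u" by blast
    have uF: "\<forall>i<q. u i \<in> Fp" using u(1) by (auto simp: V_def PiE_iff)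
    have "valid v"
      unfolding valid_def u(2) psi_def using uF G_Fp
      by (auto intro!: Fp_sum Fp_mult Fp_uminus)
    moreover have "\<forall>r<m. rowsum v r = 0"
    proof (intro allI impI)
      fix r assume r: "r < m"
      have "(\<Sum>i<q. G r (m + i) * v (m + i)) = (\<Sum>i<q. G r (m + i) * u i)"
      proof (intro sum.cong refl)
        fix i assume "i \<in> {..<q}"
        thus "G r (m + i) * v (m + i) = G r (m + i) * u i" using psi_high[of i u] u(2) by simp
      qed
      thus "rowsum v r = 0" using rowsum_eq[OF r] r by (simp add: u(2) psi_def)
    qed
    ultimately show "v \<in> dual_code n CC" using dual_char by blast
  qed
  have inj: "inj_on psi V"
  proof (rule inj_onI)
    fix u u' assume uu: "u \<in> V" "u' \<in> V" "psi u = psi u'"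
    show "u = u'"
    proof (rule PiE_ext[of u "{..<q}" "\<lambda>_. Fp"])
      show "u \<in> PiE {..<q} (\<lambda>_. Fp)" "u' \<in> PiE {..<q} (\<lambda>_. Fp)" using uu(1,2) by (simp_all add: V_def)
      fix i assume "i \<in> {..<q}"
      hence "psi u (m + i) = u i" "psi u' (m + i) = u' i" using psi_high by simp_all
      thus "u i = u' i" using uu(3) by simp
    qed
  qed
  have fV: "finite V" unfolding V_def by (intro finite_PiE) auto
  show "card (dual_code n CC) = p ^ q" using img inj by (simp add: card_image V_def card_PiE card_Fp)
  show "finite (dual_code n CC)" using img fV by simp
qed

end

context S begin

lemma three: "finite A \<Longrightarrow> a \<in> A \<Longrightarrow> b \<in> A \<Longrightarrow> c \<in> A \<Longrightarrow> a \<noteq> b \<Longrightarrow> a \<noteq> c \<Longrightarrow> b \<noteq> c \<Longrightarrow> card A \<ge> 3"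
proof -
  assume h: "finite A" "a \<in> A" "b \<in> A" "c \<in> A" "a \<noteq> b" "a \<noteq> c" "b \<noteq> c"
  have "card {a, b, c} \<le> card A" using h by (intro card_mono) auto
  thus ?thesis using h by simp
qed

lemma G0: "i < q \<Longrightarrow> G 0 (m + i) = 1" using G_high[of i 0] by simp
lemma G1: "i < q \<Longrightarrow> G 1 (m + i) = f (d i) + 1" using G_high[of i 1] by simp
lemma G2: "i < q \<Longrightarrow> G (j + 2) (m + i) = tr p e (\<beta> ^ j * d i)" using G_high[of i "j + 2"] by simp

lemma tr_diff: "tr p e (x - y :: 'a) = tr p e x - tr p e y"
  using tr_add[of x "- y"] tr_uminus[of y] by simp

lemma dual_lb:
  assumes v: "v \<in> dual_code n CC" and nz: "v \<noteq> (\<lambda>_. 0)"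
  shows "hweight n v \<ge> 3"
proof -
  have h: "valid v" "\<forall>r<m. rowsum v r = 0" using v dual_char by blast+
  have eqr: "v r = - (\<Sum>i<q. G r (m + i) * v (m + i))" if r: "r < m" for r
  proof -
    have "v r + (\<Sum>i<q. G r (m + i) * v (m + i)) = 0" using rowsum_eq[OF r, of v] h(2) r by simp
    thus ?thesis by (simp add: eq_neg_iff_add_eq_0)
  qed
  define SS where "SS = {j. j < n \<and> v j \<noteq> 0}"
  have fS: "finite SS" by (simp add: SS_def)
  have hw: "hweight n v = card SS" by (simp add: hweight_def SS_def)
  have inS: "j < n \<Longrightarrow> v j \<noteq> 0 \<Longrightarrow> j \<in> SS" for j by (simp add: SS_def)
  have inT: "i < q \<Longrightarrow> v (m + i) \<noteq> 0 \<Longrightarrow> m + i \<in> SS" for i by (simp add: SS_def)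
  obtain i1 where i1: "i1 < q" "v (m + i1) \<noteq> 0"
  proof (rule ccontr)
    assume "\<not> thesis"
    hence z: "\<forall>i<q. v (m + i) = 0" using that by blast
    have "v = (\<lambda>_. 0)"
    proof
      fix j
      show "v j = 0"
      proof (cases "j < m")
        case True
        have "(\<Sum>i<q. G j (m + i) * v (m + i)) = 0" using z by simp
        thus ?thesis using eqr[OF True] by simp
      next
        case False
        show ?thesis
        proof (cases "j < n")
          case True
          have "j = m + (j - m)" using False by simp
          moreover have "j - m < q" using False True by simp
          ultimately show ?thesis using z by metis
        next
          case False thus ?thesis using h(1) by (simp add: valid_def)
        qed
      qed
    qed
    thus False using nz by simp
  qed
  define l1 where "l1 = v (m + i1)"
  define x1 where "x1 = d i1"
  show ?thesis
  proof (cases "\<exists>i2<q. i2 \<noteq> i1 \<and> v (m + i2) \<noteq> 0")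
    case True
    then obtain i2 where i2: "i2 < q" "i2 \<noteq> i1" "v (m + i2) \<noteq> 0" by blast
    show ?thesis
    proof (cases "\<exists>r<m. v r \<noteq> 0")
      case True
      then obtain r where r: "r < m" "v r \<noteq> 0" by blast
      have "card SS \<ge> 3" using three[OF fS inS[OF _ r(2)] inT[OF i1] inT[OF i2(1) i2(3)]] r i1 i2 by simp
      thus ?thesis using hw by simp
    next
      case nr: False
      show ?thesis
      proof (cases "\<exists>i3<q. i3 \<noteq> i1 \<and> i3 \<noteq> i2 \<and> v (m + i3) \<noteq> 0")
        case True
        then obtain i3 where i3: "i3 < q" "i3 \<noteq> i1" "i3 \<noteq> i2" "v (m + i3) \<noteq> 0" by blast
        have "card SS \<ge> 3" using three[OF fS inT[OF i1] inT[OF i2(1) i2(3)] inT[OF i3(1,4)]] i2 i3 by simp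
        thus ?thesis using hw by simp
      next
        case n3: False
        have sum2: "(\<Sum>i<q. G r (m + i) * v (m + i)) = G r (m + i1) * v (m + i1) + G r (m + i2) * v (m + i2)" for r
        proof -
          have "(\<Sum>i<q. G r (m + i) * v (m + i)) = (\<Sum>i\<in>{i1, i2}. G r (m + i) * v (m + i))"
            using n3 i1 i2 by (intro sum.mono_neutral_right) auto
          thus ?thesis using i2 by simp
        qed
        have rows: "G r (m + i1) * v (m + i1) + G r (m + i2) * v (m + i2) = 0" if "r < m" for r
        proof -
          have "v r = 0" using nr that by blast
          hence "(\<Sum>i<q. G r (m + i) * v (m + i)) = 0" using eqr[OF that] by simp
          thus ?thesis using sum2[of r] by simp
        qed
        have "v (m + i1) + v (m + i2) = 0" using rows[of 0] G0 i1 i2 by simp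
        hence l2: "v (m + i2) = - l1" by (simp add: l1_def eq_neg_iff_add_eq_0 add.commute)
        have "tr p e (\<beta> ^ j * (d i1 - d i2)) = 0" if j: "j < e" for j
        proof -
          have "tr p e (\<beta> ^ j * d i1) * l1 + tr p e (\<beta> ^ j * d i2) * (- l1) = 0"
            using rows[of "j + 2"] j G2[OF i1(1), of j] G2[OF i2(1), of j] l2 by (simp add: l1_def)
          hence "l1 * (tr p e (\<beta> ^ j * d i1) - tr p e (\<beta> ^ j * d i2)) = 0" by (simp add: algebra_simps)
          hence "tr p e (\<beta> ^ j * d i1) - tr p e (\<beta> ^ j * d i2) = 0" using i1 by (simp add: l1_def)
          thus ?thesis by (simp add: right_diff_distrib tr_diff)
        qed
        hence "d i1 - d i2 = 0" using tr_nondeg by blast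
        hence "d i1 = d i2" by simp
        hence "i1 = i2" using d_inj i1 i2 by (simp add: inj_on_def)
        thus ?thesis using i2 by simp
      qed
    qed
  next
    case n2: False
    have sum1: "(\<Sum>i<q. G r (m + i) * v (m + i)) = G r (m + i1) * v (m + i1)" for r
    proof -
      have "(\<Sum>i<q. G r (m + i) * v (m + i)) = (\<Sum>i\<in>{i1}. G r (m + i) * v (m + i))"
        using n2 i1 by (intro sum.mono_neutral_right) auto
      thus ?thesis by simp
    qed
    have v0: "v 0 = - l1" using eqr[of 0] sum1[of 0] G0[OF i1(1)] by (simp add: l1_def)
    hence v0nz: "v 0 \<noteq> 0" using i1 by (simp add: l1_def)
    show ?thesis
    proof (cases "\<exists>r. 1 \<le> r \<and> r < m \<and> v r \<noteq> 0")
      case True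
      then obtain r where r: "1 \<le> r" "r < m" "v r \<noteq> 0" by blast
      have "card SS \<ge> 3" using three[OF fS inS[OF _ v0nz] inS[OF _ r(3)] inT[OF i1]] r i1 by simp
      thus ?thesis using hw by simp
    next
      case False
      hence vr: "v r = 0" if "1 \<le> r" "r < m" for r using that by blast
      have "v 1 = - ((f x1 + 1) * l1)" using eqr[of 1] sum1[of 1] G1[OF i1(1)] by (simp add: l1_def x1_def)
      hence "(f x1 + 1) * l1 = 0" using vr[of 1] by simp
      hence fx: "f x1 = -1" using i1 by (simp add: l1_def eq_neg_iff_add_eq_0)
      have "tr p e (\<beta> ^ j * x1) = 0" if j: "j < e" for j
      proof -
        have "v (j + 2) = - (tr p e (\<beta> ^ j * x1) * l1)"
          using eqr[of "j + 2"] j sum1[of "j + 2"] G2[OF i1(1), of j] by (simp add: l1_def x1_def)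
        moreover have "v (j + 2) = 0" using vr[of "j + 2"] j by simp
        ultimately show ?thesis using i1 by (simp add: l1_def)
      qed
      hence "x1 = 0" using tr_nondeg by blast
      thus ?thesis using fx RF' by simp
    qed
  qed
qed

lemma dual_params: "code_params p (dual_code n CC) n q 3"
proof -
  define vv :: "nat \<Rightarrow> 'a" where
    "vv j = (if j = 0 then -1 else if j = 1 then -1 else if j = m + (q - 1) then 1 else 0)" for j
  have q1: "q \<ge> 1" using p3 by simp
  have vvm: "vv (m + i) = (if i = q - 1 then 1 else 0)" for i by (simp add: vv_def)
  have Gl: "G r (m + (q - 1)) = (if r = 0 then 1 else if r = 1 then 1 else 0)" for r
  proof -
    have "q - 1 < q" using q1 by simp
    hence "G r (m + (q - 1)) = (if r = 0 then 1 else if r = 1 then f (d (q - 1)) + 1 else tr p e (\<beta> ^ (r - 2) * d (q - 1)))"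
      by (rule G_high)
    thus ?thesis using dlast RF' by simp
  qed
  have vv_dual: "vv \<in> dual_code n CC"
  proof -
    have "valid vv" unfolding valid_def vv_def using q1 by auto
    moreover have "rowsum vv r = 0" if r: "r < m" for r
    proof -
      have "(\<Sum>i<q. G r (m + i) * vv (m + i)) = (\<Sum>i<q. if i = q - 1 then G r (m + (q - 1)) else 0)"
      proof (intro sum.cong refl)
        fix i assume "i \<in> {..<q}"
        show "G r (m + i) * vv (m + i) = (if i = q - 1 then G r (m + (q - 1)) else 0)"
          using vvm[of i] by (cases "i = q - 1") simp_all
      qed
      also have "\<dots> = G r (m + (q - 1))" using q1 by (simp only: sum.delta finite_lessThan) simp
      finally show ?thesis using rowsum_eq[OF r] Gl[of r] r by (simp add: vv_def)
    qed
    ultimately show ?thesis using dual_char by blast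
  qed
  have vvnz: "vv \<noteq> (\<lambda>_. 0)"
  proof
    assume "vv = (\<lambda>_. 0)" hence "vv 0 = 0" by simp
    thus False by (simp add: vv_def)
  qed
  have "{j. j < n \<and> vv j \<noteq> 0} = {0, 1, m + (q - 1)}"
    using q1 by (auto simp: vv_def)
  hence hw3: "hweight n vv = 3" by (simp add: hweight_def)
  have part1: "\<forall>c\<in>dual_code n CC. (\<forall>j<n. c j \<in> Fp) \<and> (\<forall>j\<ge>n. c j = 0)"
    unfolding dual_code_def by blast
  have part3: "3 = Min (hweight n ` (dual_code n CC - {\<lambda>_. 0}))"
  proof (rule Min_eqI[symmetric])
    show "finite (hweight n ` (dual_code n CC - {\<lambda>_. 0}))" using dual_fin by simp
  next
    fix y assume "y \<in> hweight n ` (dual_code n CC - {\<lambda>_. 0})"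
    then obtain v where "v \<in> dual_code n CC" "v \<noteq> (\<lambda>_. 0)" "y = hweight n v" by blast
    thus "3 \<le> y" using dual_lb by simp
  next
    show "3 \<in> hweight n ` (dual_code n CC - {\<lambda>_. 0})" using vv_dual vvnz hw3 by force
  qed
  show ?thesis unfolding code_params_def using part1 dual_card part3 by blast
qed

lemma sphere: "sphere_packing_rules_out p n q (3 + 2)"
proof -
  have "(n choose 2) * (p - 1) ^ 2 \<le> (\<Sum>i\<le>2. (n choose i) * (p - 1) ^ i)"
    by (simp add: numeral_2_eq_2)
  moreover have "4 * (n choose 2) \<le> (n choose 2) * (p - 1) ^ 2"
  proof -
    have "(2::nat) ^ 2 \<le> (p - 1) ^ 2" using p3 by (intro power_mono) auto
    thus ?thesis by (simp add: mult.commute)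
  qed
  moreover have "2 * (n choose 2) = n * (n - 1)" by (simp add: choose_two)
  moreover have "q * q \<le> n * (n - 1)" by (intro mult_mono) auto
  moreover have "p ^ m \<le> q * q"
  proof -
    have "p ^ m \<le> p ^ (e + e)" using p3 e2 by (intro power_increasing) auto
    thus ?thesis by (simp add: power_add)
  qed
  moreover have "p ^ m > 0" using p3 by simp
  ultimately have "p ^ m < (\<Sum>i\<le>2. (n choose i) * (p - 1) ^ i)" by linarith
  hence "p ^ q * p ^ m < p ^ q * (\<Sum>i\<le>2. (n choose i) * (p - 1) ^ i)"
    by (rule mult_strict_left_mono) (use p3 in simp)
  moreover have B: "p ^ n = p ^ q * p ^ m" by (simp add: power_add add.assoc)
  moreover have e52: "(3 + 2 - 1) div 2 = (2::nat)" by simp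
  ultimately show ?thesis unfolding sphere_packing_rules_out_def e52 B by simp
qed

end

theorem theorem4p4:
  fixes p e :: nat and f :: "'a::{finite,field} \<Rightarrow> 'a" and \<epsilon> :: int
    and fstar :: "'a \<Rightarrow> 'a" and \<beta> :: 'a and d :: "nat \<Rightarrow> 'a"
  assumes "prime p" and "odd p" and "e \<ge> 2" and "even e"
    and "card (UNIV::'a set) = p ^ e"
    and "in_RF p e f"
    and "weakly_regular_bent p e f \<epsilon> fstar"
    and "\<beta> \<noteq> 0" and "\<forall>x::'a. x \<noteq> 0 \<longrightarrow> (\<exists>k::nat. x = \<beta> ^ k)"
    and "bij_betw d {0..<p ^ e} UNIV" and "d (p ^ e - 1) = 0"
  shows "(\<epsilon> * Legendre (-1) (int p) ^ (e div 2) = 1 \<longrightarrow>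
            code_params p (row_code (e + 2) (p ^ e + e + 2) (G2' p e f \<beta> d))
              (p ^ e + e + 2) (e + 2) (p ^ e - p ^ (e - 1) - (p - 1) * p ^ (e div 2 - 1) + 2))
       \<and> (\<epsilon> * Legendre (-1) (int p) ^ (e div 2) = -1 \<longrightarrow>
            code_params p (row_code (e + 2) (p ^ e + e + 2) (G2' p e f \<beta> d))
              (p ^ e + e + 2) (e + 2) (p ^ e - p ^ (e - 1) - p ^ (e div 2 - 1) + 1))
       \<and> code_params p (dual_code (p ^ e + e + 2) (row_code (e + 2) (p ^ e + e + 2) (G2' p e f \<beta> d)))
              (p ^ e + e + 2) (p ^ e) 3
       \<and> sphere_packing_rules_out p (p ^ e + e + 2) (p ^ e) (3 + 2)"
proof -
  interpret S p e f \<epsilon> fstar \<beta> d using assms by (simp add: S_def)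
  show ?thesis
  proof (intro conjI impI)
    assume "\<epsilon> * Legendre (-1) (int p) ^ (e div 2) = 1"
    hence "sgn0 = 1" by (simp add: sgn0_def)
    from code1[OF this] show "code_params p (row_code (e + 2) (p ^ e + e + 2) (G2' p e f \<beta> d))
              (p ^ e + e + 2) (e + 2) (p ^ e - p ^ (e - 1) - (p - 1) * p ^ (e div 2 - 1) + 2)"
      unfolding D1_def .
  next
    assume "\<epsilon> * Legendre (-1) (int p) ^ (e div 2) = -1"
    hence "sgn0 = -1" by (simp add: sgn0_def)
    from code2[OF this] show "code_params p (row_code (e + 2) (p ^ e + e + 2) (G2' p e f \<beta> d))
              (p ^ e + e + 2) (e + 2) (p ^ e - p ^ (e - 1) - p ^ (e div 2 - 1) + 1)"
      unfolding D2_def .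
  next
    show "code_params p (dual_code (p ^ e + e + 2) (row_code (e + 2) (p ^ e + e + 2) (G2' p e f \<beta> d)))
              (p ^ e + e + 2) (p ^ e) 3" by (rule dual_params)
  next
    show "sphere_packing_rules_out p (p ^ e + e + 2) (p ^ e) (3 + 2)" by (rule sphere)
  qed
qed


end
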